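(* For all integers $k,t\geq 2$: $\mathrm{sat}^{\star}([t]^n,C_k)\leq 2^{k-2}$, and $\mathrm{sat}^{\star}([t]^n,A_k)=\Theta(n)$ (as $n\to\infty$ with $k,t$ fixed).
   Context: For positive integers $n,t$, $[n]=\{1,\dots,n\}$ and the hypergrid $[t]^n$ is the set of functions $f:[n]\to[t]$, partially ordered by $f\leq g$ iff $f(i)\leq g(i)$ for all $i\in[n]$. An induced copy of a poset $P$ in a family $\mathcal{F}\subseteq[t]^n$ is an injective map $\phi:P\to\mathcal{F}$ such that $\phi(x)\leq\phi(y)$ iff $x\leq_P y$. A family $\mathcal{F}\subseteq[t]^n$ is induced $P$-free if it contains no induced copy of $P$; it is induced $P$-saturated if it is induced $P$-free and for every $f\in[t]^n\setminus\mathcal{F}$ the family $\mathcal{F}\cup\{f\}$ contains an induced copy of $P$. Whenever $P$ embeds as an induced subposet of $[t]^n$, $\mathrm{sat}^{\star}([t]^n,P)$ denotes the minimum size of an induced $P$-saturated family in $[t]^n$. $C_k$ denotes the chain on $k$ elements and $A_k$ the antichain on $k$ elements. *)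

theory Defs
  imports Main "HOL-Library.FuncSet" "HOL-Library.Landau_Symbols"
begin

definition hypergrid :: "nat \<Rightarrow> nat \<Rightarrow> (nat \<Rightarrow> nat) set" where
  "hypergrid n t = {1..n} \<rightarrow>\<^sub>E {1..t}"

definition grid_le :: "nat \<Rightarrow> (nat \<Rightarrow> nat) \<Rightarrow> (nat \<Rightarrow> nat) \<Rightarrow> bool" where
  "grid_le n f g \<longleftrightarrow> (\<forall>i\<in>{1..n}. f i \<le> g i)"

text \<open>A poset P is given by a carrier X and its order relation R.
  An induced copy of (X,R) in F is an injective map phi from X into F with
  phi x \<le> phi y iff R x y.\<close>
definition induced_copy ::
  "'a set \<Rightarrow> ('a \<Rightarrow> 'a \<Rightarrow> bool) \<Rightarrow> nat \<Rightarrow> (nat \<Rightarrow> nat) set \<Rightarrow> ('a \<Rightarrow> (nat \<Rightarrow> nat)) \<Rightarrow> bool" where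
  "induced_copy X R n F \<phi> \<longleftrightarrow> inj_on \<phi> X \<and> \<phi> ` X \<subseteq> F \<and>
     (\<forall>x\<in>X. \<forall>y\<in>X. grid_le n (\<phi> x) (\<phi> y) \<longleftrightarrow> R x y)"

definition induced_free ::
  "'a set \<Rightarrow> ('a \<Rightarrow> 'a \<Rightarrow> bool) \<Rightarrow> nat \<Rightarrow> (nat \<Rightarrow> nat) set \<Rightarrow> bool" where
  "induced_free X R n F \<longleftrightarrow> \<not> (\<exists>\<phi>. induced_copy X R n F \<phi>)"

definition induced_saturated ::
  "'a set \<Rightarrow> ('a \<Rightarrow> 'a \<Rightarrow> bool) \<Rightarrow> nat \<Rightarrow> nat \<Rightarrow> (nat \<Rightarrow> nat) set \<Rightarrow> bool" where
  "induced_saturated X R n t F \<longleftrightarrow> F \<subseteq> hypergrid n t \<and> induced_free X R n F \<and>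
     (\<forall>f \<in> hypergrid n t - F. \<not> induced_free X R n (insert f F))"

definition embeds_in_grid ::
  "'a set \<Rightarrow> ('a \<Rightarrow> 'a \<Rightarrow> bool) \<Rightarrow> nat \<Rightarrow> nat \<Rightarrow> bool" where
  "embeds_in_grid X R n t \<longleftrightarrow> (\<exists>\<phi>. induced_copy X R n (hypergrid n t) \<phi>)"

text \<open>sat*([t]^n, P): minimum size of an induced P-saturated family (meaningful when P embeds).\<close>
definition sat_star ::
  "'a set \<Rightarrow> ('a \<Rightarrow> 'a \<Rightarrow> bool) \<Rightarrow> nat \<Rightarrow> nat \<Rightarrow> nat" where
  "sat_star X R n t = (LEAST m. \<exists>F. induced_saturated X R n t F \<and> card F = m)"

text \<open>Chain C_k and antichain A_k on carrier {1..k}.\<close>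
definition chain_le :: "nat \<Rightarrow> nat \<Rightarrow> bool" where "chain_le x y \<longleftrightarrow> x \<le> y"
definition antichain_le :: "nat \<Rightarrow> nat \<Rightarrow> bool" where "antichain_le x y \<longleftrightarrow> x = y"

end

theory Submission
  imports Defs
begin


lemma grid_le_refl[simp]: "grid_le n f f"
  by (simp add: grid_le_def)

lemma grid_le_trans: "grid_le n f g \<Longrightarrow> grid_le n g h \<Longrightarrow> grid_le n f h"
  unfolding grid_le_def using order_trans by blast

lemma hypergrid_mem: "f \<in> hypergrid n t \<longleftrightarrow> (\<forall>i\<in>{1..n}. f i \<in> {1..t}) \<and> (\<forall>i. i \<notin> {1..n} \<longrightarrow> f i = undefined)"
  unfolding hypergrid_def PiE_def extensional_def by auto

lemma grid_le_antisym:
  assumes "f \<in> hypergrid n t" "g \<in> hypergrid n t" "grid_le n f g" "grid_le n g f"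
  shows "f = g"
proof
  fix i show "f i = g i"
    using assms unfolding hypergrid_mem grid_le_def
    by (cases "i \<in> {1..n}") (auto intro: order_antisym)
qed

lemma finite_hypergrid[simp]: "finite (hypergrid n t)"
  unfolding hypergrid_def by (intro finite_PiE) auto

definition rk :: "nat \<Rightarrow> (nat \<Rightarrow> nat) \<Rightarrow> nat" where
  "rk n f = (\<Sum>i\<in>{1..n}. f i)"

lemma rk_mono: "grid_le n f g \<Longrightarrow> rk n f \<le> rk n g"
  unfolding rk_def grid_le_def by (intro sum_mono) auto

lemma rk_strict:
  assumes "f \<in> hypergrid n t" "g \<in> hypergrid n t" "grid_le n f g" "f \<noteq> g"
  shows "rk n f < rk n g"
proof -
  have "\<exists>i\<in>{1..n}. f i < g i"
  proof (rule ccontr)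
    assume "\<not> ?thesis"
    hence "grid_le n g f" using assms(3) unfolding grid_le_def by force
    thus False using grid_le_antisym assms by blast
  qed
  thus ?thesis unfolding rk_def
    using assms(3) unfolding grid_le_def by (intro sum_strict_mono_ex1) auto
qed

lemma rk_bounds:
  assumes "f \<in> hypergrid n t"
  shows "n \<le> rk n f" "rk n f \<le> n * t"
proof -
  have "(\<Sum>i\<in>{1..n}. (1::nat)) \<le> rk n f"
    unfolding rk_def using assms unfolding hypergrid_mem by (intro sum_mono) auto
  thus "n \<le> rk n f" by simp
  have "rk n f \<le> (\<Sum>i\<in>{1..n}. t)"
    unfolding rk_def using assms unfolding hypergrid_mem by (intro sum_mono) auto
  thus "rk n f \<le> n * t" by simp
qed

lemma rk_le_iff_chain:
  assumes "f \<in> hypergrid n t" "g \<in> hypergrid n t" "grid_le n f g \<or> grid_le n g f"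
  shows "grid_le n f g \<longleftrightarrow> rk n f \<le> rk n g"
proof
  assume "grid_le n f g" thus "rk n f \<le> rk n g" by (rule rk_mono)
next
  assume h: "rk n f \<le> rk n g"
  show "grid_le n f g"
  proof (rule ccontr)
    assume "\<not> grid_le n f g"
    hence "grid_le n g f" "g \<noteq> f" using assms(3) by auto
    hence "rk n g < rk n f" using rk_strict assms(1,2) by blast
    thus False using h by simp
  qed
qed

definition is_chain :: "nat \<Rightarrow> (nat \<Rightarrow> nat) set \<Rightarrow> bool" where
  "is_chain n C \<longleftrightarrow> (\<forall>x\<in>C. \<forall>y\<in>C. grid_le n x y \<or> grid_le n y x)"

definition is_anti :: "nat \<Rightarrow> (nat \<Rightarrow> nat) set \<Rightarrow> bool" where
  "is_anti n Z \<longleftrightarrow> (\<forall>x\<in>Z. \<forall>y\<in>Z. x \<noteq> y \<longrightarrow> \<not> grid_le n x y)"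

lemma copy_mono: "induced_copy X R n F \<phi> \<Longrightarrow> F \<subseteq> G \<Longrightarrow> induced_copy X R n G \<phi>"
  unfolding induced_copy_def by auto

lemma chain_copy:
  assumes C: "C \<subseteq> hypergrid n t" "finite C" "is_chain n C" "k \<le> card C"
  shows "\<exists>\<phi>. induced_copy {1..k} chain_le n C \<phi>"
proof -
  have inj: "inj_on (rk n) C"
  proof
    fix x y assume xy: "x \<in> C" "y \<in> C" "rk n x = rk n y"
    have g: "x \<in> hypergrid n t" "y \<in> hypergrid n t" using xy C by auto
    show "x = y"
    proof (rule ccontr)
      assume ne: "x \<noteq> y"
      have "grid_le n x y \<or> grid_le n y x" using C(3) xy unfolding is_chain_def by blast
      thus False using rk_strict[OF g(1) g(2) _ ne] rk_strict[OF g(2) g(1) _ ne[symmetric]] xy(3) by auto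
    qed
  qed
  define xs where "xs = sorted_list_of_set (rk n ` C)"
  have len: "length xs = card C" unfolding xs_def using inj by (simp add: card_image)
  have sxs: "sorted_wrt (<) xs" unfolding xs_def by (rule strict_sorted_list_of_set)
  have setxs: "set xs = rk n ` C" unfolding xs_def using C by simp
  define \<phi> where "\<phi> j = the_inv_into C (rk n) (xs ! (j - 1))" for j
  have phiC: "\<phi> j \<in> C" and rkphi: "rk n (\<phi> j) = xs ! (j - 1)" if "j \<in> {1..k}" for j
  proof -
    have "j - 1 < length xs" using that len C by auto
    hence "xs ! (j - 1) \<in> rk n ` C" using setxs nth_mem by metis
    thus "\<phi> j \<in> C" "rk n (\<phi> j) = xs ! (j - 1)"
      unfolding \<phi>_def using inj the_inv_into_into[OF inj] f_the_inv_into_f[OF inj] by auto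
  qed
  have ord: "xs ! (x - 1) \<le> xs ! (y - 1) \<longleftrightarrow> x \<le> y" if "x \<in> {1..k}" "y \<in> {1..k}" for x y
  proof -
    have lx: "x - 1 < length xs" "y - 1 < length xs" using that len C by auto
    show ?thesis
    proof
      assume h: "xs ! (x - 1) \<le> xs ! (y - 1)"
      show "x \<le> y"
      proof (rule ccontr)
        assume "\<not> x \<le> y"
        hence "y - 1 < x - 1" using that by auto
        hence "xs ! (y - 1) < xs ! (x - 1)" using sorted_wrt_nth_less[OF sxs] lx by blast
        thus False using h by simp
      qed
    next
      assume h: "x \<le> y"
      show "xs ! (x - 1) \<le> xs ! (y - 1)"
      proof (cases "x = y")
        case False
        hence "x - 1 < y - 1" using that h by auto
        thus ?thesis using sorted_wrt_nth_less[OF sxs] lx by (simp add: less_imp_le)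
      qed simp
    qed
  qed
  have "induced_copy {1..k} chain_le n C \<phi>"
    unfolding induced_copy_def
  proof (intro conjI ballI)
    show "inj_on \<phi> {1..k}"
    proof
      fix x y assume "x \<in> {1..k}" "y \<in> {1..k}" "\<phi> x = \<phi> y"
      hence "xs ! (x - 1) = xs ! (y - 1)" using rkphi by metis
      thus "x = y" using ord[of x y] ord[of y x] \<open>x \<in> {1..k}\<close> \<open>y \<in> {1..k}\<close> by simp
    qed
    show "\<phi> ` {1..k} \<subseteq> C" using phiC by auto
    fix x y assume xy: "x \<in> {1..k}" "y \<in> {1..k}"
    have "grid_le n (\<phi> x) (\<phi> y) \<longleftrightarrow> rk n (\<phi> x) \<le> rk n (\<phi> y)"
      using rk_le_iff_chain[of "\<phi> x" n t "\<phi> y"] phiC[OF xy(1)] phiC[OF xy(2)] C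
      unfolding is_chain_def by auto
    thus "grid_le n (\<phi> x) (\<phi> y) = chain_le x y"
      unfolding chain_le_def using ord[OF xy] rkphi xy by simp
  qed
  thus ?thesis by blast
qed

lemma anti_copy_iff:
  assumes "k \<ge> 1"
  shows "(\<exists>\<phi>. induced_copy {1..k} antichain_le n F \<phi>) \<longleftrightarrow> (\<exists>Z\<subseteq>F. card Z = k \<and> is_anti n Z)"
proof
  assume "\<exists>\<phi>. induced_copy {1..k} antichain_le n F \<phi>"
  then obtain \<phi> where p: "induced_copy {1..k} antichain_le n F \<phi>" by blast
  show "\<exists>Z\<subseteq>F. card Z = k \<and> is_anti n Z"
  proof (intro exI conjI)
    show "\<phi> ` {1..k} \<subseteq> F" using p unfolding induced_copy_def by auto
    show "card (\<phi> ` {1..k}) = k" using p unfolding induced_copy_def by (simp add: card_image)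
    show "is_anti n (\<phi> ` {1..k})" using p unfolding induced_copy_def is_anti_def antichain_le_def
      by auto
  qed
next
  assume "\<exists>Z\<subseteq>F. card Z = k \<and> is_anti n Z"
  then obtain Z where Z: "Z \<subseteq> F" "card Z = k" "is_anti n Z" by blast
  have "finite Z" using Z assms by (intro card_ge_0_finite) simp
  then obtain h where h0: "bij_betw h {1..card Z} Z" using ex_bij_betw_nat_finite_1 by blast
  have hi: "inj_on h {1..k}" and hs: "h ` {1..k} = Z" using h0 Z(2) unfolding bij_betw_def by auto
  have "induced_copy {1..k} antichain_le n F h"
    unfolding induced_copy_def antichain_le_def
  proof (intro conjI ballI)
    show "inj_on h {1..k}" by (rule hi)
    show "h ` {1..k} \<subseteq> F" using hs Z(1) by simp
    fix x y assume xy: "x \<in> {1..k}" "y \<in> {1..k}"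
    show "grid_le n (h x) (h y) = (x = y)"
    proof
      assume "grid_le n (h x) (h y)"
      moreover have "h x \<in> Z" "h y \<in> Z" using hs xy by auto
      ultimately have "h x = h y" using Z(3) unfolding is_anti_def by blast
      thus "x = y" using hi xy unfolding inj_on_def by blast
    qed simp
  qed
  thus "\<exists>\<phi>. induced_copy {1..k} antichain_le n F \<phi>" by blast
qed

lemma no_long_chain:
  assumes "induced_copy {1..k} chain_le n F \<phi>"
    and "\<And>x y. x \<in> F \<Longrightarrow> y \<in> F \<Longrightarrow> grid_le n x y \<Longrightarrow> x \<noteq> y \<Longrightarrow> \<pi> x < \<pi> y"
    and "\<And>x. x \<in> F \<Longrightarrow> \<pi> x \<le> B"
  shows "k \<le> B + 1"
proof -
  have "inj_on (\<pi> \<circ> \<phi>) {1..k}"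
  proof
    fix x y assume xy: "x \<in> {1..k}" "y \<in> {1..k}" "(\<pi> \<circ> \<phi>) x = (\<pi> \<circ> \<phi>) y"
    show "x = y"
    proof (rule ccontr)
      assume ne: "x \<noteq> y"
      have F: "\<phi> x \<in> F" "\<phi> y \<in> F" using assms(1) xy unfolding induced_copy_def by auto
      have ne': "\<phi> x \<noteq> \<phi> y" using assms(1) xy ne unfolding induced_copy_def inj_on_def by blast
      show False
      proof (cases "x < y")
        case True
        hence le: "grid_le n (\<phi> x) (\<phi> y)" using assms(1) xy unfolding induced_copy_def chain_le_def by auto
        show False using assms(2)[OF F le ne'] xy by simp
      next
        case False
        hence le: "grid_le n (\<phi> y) (\<phi> x)" using assms(1) xy unfolding induced_copy_def chain_le_def by auto
        show False using assms(2)[OF F(2) F(1) le] ne' xy by simp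
      qed
    qed
  qed
  moreover have "(\<pi> \<circ> \<phi>) ` {1..k} \<subseteq> {0..B}" using assms(1,3) unfolding induced_copy_def by auto
  ultimately have "card ((\<pi> \<circ> \<phi>) ` {1..k}) \<le> card {0..B}" by (intro card_mono) auto
  moreover have "card ((\<pi> \<circ> \<phi>) ` {1..k}) = card {1..k}" using \<open>inj_on (\<pi> \<circ> \<phi>) {1..k}\<close> by (rule card_image)
  ultimately have "card {1..k} \<le> card {0..B}" by linarith
  thus ?thesis by simp
qed



definition antich :: "('a \<Rightarrow> 'a \<Rightarrow> bool) \<Rightarrow> 'a set \<Rightarrow> bool" where
  "antich le Z \<longleftrightarrow> (\<forall>x\<in>Z. \<forall>y\<in>Z. x \<noteq> y \<longrightarrow> \<not> le x y)"

lemma max_exists: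
  fixes le :: "'a \<Rightarrow> 'a \<Rightarrow> bool"
  assumes trans: "\<And>x y z. le x y \<Longrightarrow> le y z \<Longrightarrow> le x z"
    and fin: "finite S" and ne: "S \<noteq> {}"
    and antis: "\<And>x y. x \<in> S \<Longrightarrow> y \<in> S \<Longrightarrow> le x y \<Longrightarrow> le y x \<Longrightarrow> x = y"
    and refl: "\<And>x. le x x"
  shows "\<exists>a\<in>S. \<forall>x\<in>S. le a x \<longrightarrow> x = a"
proof -
  define f where "f x = card {z\<in>S. le z x}" for x
  obtain a0 where "a0 \<in> S" using ne by blast
  have "\<exists>a. a \<in> S \<and> (\<forall>y. y \<in> S \<longrightarrow> f y \<le> f a)"
    by (rule ex_has_greatest_nat[where b = "card S + 1"]) (use \<open>a0 \<in> S\<close> in \<open>auto simp: f_def intro!: le_imp_less_Suc card_mono fin\<close>)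
  then obtain a where a: "a \<in> S" "\<And>y. y \<in> S \<Longrightarrow> f y \<le> f a" by blast
  show ?thesis
  proof (intro bexI[OF _ a(1)] ballI impI)
    fix x assume x: "x \<in> S" "le a x"
    show "x = a"
    proof (rule ccontr)
      assume ne: "x \<noteq> a"
      have "{z\<in>S. le z a} \<subset> {z\<in>S. le z x}"
      proof
        show "{z\<in>S. le z a} \<subseteq> {z\<in>S. le z x}" using x trans by blast
        have "x \<notin> {z\<in>S. le z a}" using antis[OF x(1) a(1) _ x(2)] ne by blast
        moreover have "x \<in> {z\<in>S. le z x}" using x refl by blast
        ultimately show "{z\<in>S. le z a} \<noteq> {z\<in>S. le z x}" by blast
      qed
      hence "f a < f x" unfolding f_def by (rule psubset_card_mono[rotated]) (use fin in auto)
      thus False using a(2)[OF x(1)] by simp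
    qed
  qed
qed

lemma chain_greatest:
  fixes le :: "'a \<Rightarrow> 'a \<Rightarrow> bool"
  assumes trans: "\<And>x y z. le x y \<Longrightarrow> le y z \<Longrightarrow> le x z"
    and fin: "finite X" and ne: "X \<noteq> {}"
    and antis: "\<And>x y. x \<in> X \<Longrightarrow> y \<in> X \<Longrightarrow> le x y \<Longrightarrow> le y x \<Longrightarrow> x = y"
    and refl: "\<And>x. le x x"
    and ch: "\<And>x y. x \<in> X \<Longrightarrow> y \<in> X \<Longrightarrow> le x y \<or> le y x"
  shows "\<exists>m\<in>X. \<forall>z\<in>X. le z m"
proof -
  have "\<exists>a\<in>X. \<forall>x\<in>X. le a x \<longrightarrow> x = a"
    by (rule max_exists[where le=le]) (use trans fin ne antis refl in blast)+
  then obtain m where m: "m \<in> X" "\<forall>x\<in>X. le m x \<longrightarrow> x = m" by blast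
  show ?thesis
  proof (intro bexI[OF _ m(1)] ballI)
    fix z assume "z \<in> X"
    thus "le z m" using ch[OF \<open>z \<in> X\<close> m(1)] m(2) refl by metis
  qed
qed

lemma dilworth:
  fixes le :: "'a \<Rightarrow> 'a \<Rightarrow> bool"
  assumes trans: "\<And>x y z. le x y \<Longrightarrow> le y z \<Longrightarrow> le x z"
    and refl: "\<And>x. le x x"
  shows "finite S \<Longrightarrow> (\<And>x y. x \<in> S \<Longrightarrow> y \<in> S \<Longrightarrow> le x y \<Longrightarrow> le y x \<Longrightarrow> x = y)
    \<Longrightarrow> (\<forall>Z\<subseteq>S. antich le Z \<longrightarrow> card Z \<le> w)
    \<Longrightarrow> \<exists>col. (\<forall>x\<in>S. col x < w) \<and> (\<forall>x\<in>S. \<forall>y\<in>S. col x = col y \<longrightarrow> le x y \<or> le y x)"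
proof (induction "card S" arbitrary: S w rule: less_induct)
  case less
  note fin = less.prems(1) and antis = less.prems(2) and wid = less.prems(3)
  show ?case
  proof (cases "S = {}")
    case True thus ?thesis by auto
  next
    case False
    have "\<exists>a\<in>S. \<forall>x\<in>S. le a x \<longrightarrow> x = a"
      by (rule max_exists[where le=le]) (use trans fin False antis refl in blast)+
    then obtain a where a: "a \<in> S" "\<forall>x\<in>S. le a x \<longrightarrow> x = a" by blast
    define S' where "S' = S - {a}"
    have finS': "finite S'" using fin S'_def by auto
    have S'lt: "card S' < card S" unfolding S'_def using a(1) fin by (intro psubset_card_mono) auto
    have antisS': "\<And>x y. x \<in> S' \<Longrightarrow> y \<in> S' \<Longrightarrow> le x y \<Longrightarrow> le y x \<Longrightarrow> x = y"
      using antis S'_def by blast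
    have "antich le {a}" unfolding antich_def by auto
    moreover have "{a} \<subseteq> S" using a(1) by simp
    ultimately have "card {a} \<le> w" using wid by blast
    hence w1: "1 \<le> w" by simp
    show ?thesis
    proof (cases "\<exists>Z\<subseteq>S'. antich le Z \<and> w \<le> card Z")
      case False
      hence "\<forall>Z\<subseteq>S'. antich le Z \<longrightarrow> card Z \<le> w - 1" by force
      from less.hyps[OF S'lt finS' antisS' this] obtain col' where
        col': "\<forall>x\<in>S'. col' x < w - 1" "\<forall>x\<in>S'. \<forall>y\<in>S'. col' x = col' y \<longrightarrow> le x y \<or> le y x"
        by blast
      define col where "col = col'(a := w - 1)"
      show ?thesis
      proof (intro exI[of _ col] conjI ballI impI)
        fix x assume "x \<in> S" thus "col x < w" using col'(1) w1 unfolding col_def S'_def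
          by (cases "x = a") force+
      next
        fix x y assume xy: "x \<in> S" "y \<in> S" "col x = col y"
        show "le x y \<or> le y x"
        proof (cases "x = a \<or> y = a")
          case True
          thus ?thesis using xy col'(1) refl unfolding col_def S'_def
            by (metis DiffI fun_upd_other fun_upd_same less_irrefl singletonD)
        next
          case False
          thus ?thesis using xy col'(2) unfolding col_def S'_def by auto
        qed
      qed
    next
      case True
      then obtain Z0 where Z0: "Z0 \<subseteq> S'" "antich le Z0" "w \<le> card Z0" by blast
      have widS': "\<forall>Z\<subseteq>S'. antich le Z \<longrightarrow> card Z \<le> w" using wid S'_def by blast
      from less.hyps[OF S'lt finS' antisS' widS'] obtain col' where
        col': "\<forall>x\<in>S'. col' x < w" "\<forall>x\<in>S'. \<forall>y\<in>S'. col' x = col' y \<longrightarrow> le x y \<or> le y x"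
        by blast
      have full: "\<exists>z\<in>Z. col' z = c" if Z: "Z \<subseteq> S'" "antich le Z" "card Z = w" and c: "c < w" for Z c
      proof -
        have "inj_on col' Z"
        proof
          fix x y assume xy: "x \<in> Z" "y \<in> Z" "col' x = col' y"
          have "le x y \<or> le y x" using col'(2) xy Z(1) by (meson subsetD)
          thus "x = y" using Z(2) xy unfolding antich_def by auto
        qed
        hence "card (col' ` Z) = w" using Z by (simp add: card_image)
        moreover have "col' ` Z \<subseteq> {..<w}" using Z col'(1) by auto
        ultimately have "col' ` Z = {..<w}" by (intro card_subset_eq) simp_all
        hence "c \<in> col' ` Z" using c by simp
        thus ?thesis by (metis imageE)
      qed
      define good where "good z \<longleftrightarrow> (\<exists>Z\<subseteq>S'. antich le Z \<and> card Z = w \<and> z \<in> Z)" for z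
      define X where "X c = {z\<in>S'. col' z = c \<and> good z}" for c
      have cw0: "card Z0 = w" using Z0 widS' by (simp add: le_antisym)
      have Xne: "X c \<noteq> {}" if "c < w" for c
        using full[OF Z0(1,2) cw0 that] Z0 cw0 unfolding X_def good_def by blast
      have "\<forall>c. \<exists>m. c < w \<longrightarrow> m \<in> X c \<and> (\<forall>z\<in>X c. le z m)"
      proof (intro allI)
        fix c
        show "\<exists>m. c < w \<longrightarrow> m \<in> X c \<and> (\<forall>z\<in>X c. le z m)"
        proof (cases "c < w")
          case True
          have "finite (X c)" using finS' unfolding X_def by auto
          moreover have "\<And>x y. x \<in> X c \<Longrightarrow> y \<in> X c \<Longrightarrow> le x y \<Longrightarrow> le y x \<Longrightarrow> x = y"
            using antisS' unfolding X_def by blast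
          moreover have "\<And>x y. x \<in> X c \<Longrightarrow> y \<in> X c \<Longrightarrow> le x y \<or> le y x"
            using col'(2) unfolding X_def by blast
          ultimately have "\<exists>m\<in>X c. \<forall>z\<in>X c. le z m"
            by (intro chain_greatest[where le=le]) (use trans Xne[OF True] refl in blast)+
          then obtain m where "m \<in> X c" "\<forall>z\<in>X c. le z m" by blast
          thus ?thesis by blast
        qed simp
      qed
      then obtain xm where xm: "\<And>c. c < w \<Longrightarrow> xm c \<in> X c" "\<And>c z. c < w \<Longrightarrow> z \<in> X c \<Longrightarrow> le z (xm c)"
        by metis
      have xmS': "xm c \<in> S'" "col' (xm c) = c" "good (xm c)" if "c < w" for c
        using xm(1)[OF that] unfolding X_def by auto
      have anti: "\<not> le (xm c) (xm d)" if cd: "c < w" "d < w" "c \<noteq> d" for c d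
      proof
        assume le: "le (xm c) (xm d)"
        obtain Zd where Zd: "Zd \<subseteq> S'" "antich le Zd" "card Zd = w" "xm d \<in> Zd"
          using xmS'(3)[OF cd(2)] unfolding good_def by blast
        obtain y where y: "y \<in> Zd" "col' y = c" using full[OF Zd(1-3) cd(1)] by blast
        have "y \<in> X c" unfolding X_def good_def using y Zd by blast
        hence "le y (xm c)" using xm(2)[OF cd(1)] by blast
        hence "le y (xm d)" using le trans by blast
        moreover have "y \<noteq> xm d" using y xmS'(2)[OF cd(2)] cd by auto
        ultimately show False using Zd(2) y(1) Zd(4) unfolding antich_def by blast
      qed
      have "\<exists>c<w. le (xm c) a"
      proof (rule ccontr)
        assume none: "\<not> (\<exists>c<w. le (xm c) a)"
        define Z where "Z = insert a (xm ` {..<w})"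
        have injxm: "inj_on xm {..<w}"
        proof
          fix c d assume "c \<in> {..<w}" "d \<in> {..<w}" "xm c = xm d"
          thus "c = d" using xmS'(2) by (metis lessThan_iff)
        qed
        have anotin: "a \<notin> xm ` {..<w}" using xmS'(1) S'_def by auto
        have "Z \<subseteq> S" unfolding Z_def using a(1) xmS'(1) S'_def by auto
        moreover have "antich le Z"
          unfolding antich_def Z_def
        proof (intro ballI impI)
          fix x y assume x: "x \<in> insert a (xm ` {..<w})" and y: "y \<in> insert a (xm ` {..<w})" and ne: "x \<noteq> y"
          show "\<not> le x y"
          proof (cases "x = a")
            case True
            then obtain d where "d < w" "y = xm d" using y ne by auto
            thus ?thesis using True a(2) xmS'(1)[of d] S'_def anotin by auto
          next
            case False
            then obtain c where c: "c < w" "x = xm c" using x by auto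
            show ?thesis
            proof (cases "y = a")
              case True thus ?thesis using none c by auto
            next
              case False
              then obtain d where "d < w" "y = xm d" using y by auto
              thus ?thesis using anti c ne by blast
            qed
          qed
        qed
        ultimately have "card Z \<le> w" using wid by blast
        moreover have "card Z = w + 1" unfolding Z_def using anotin injxm
          by (simp add: card_image)
        ultimately show False by simp
      qed
      then obtain c where c: "c < w" "le (xm c) a" by blast
      define K where "K = insert a {z\<in>S'. col' z = c \<and> le z (xm c)}"
      define S'' where "S'' = S - K"
      have S''lt: "card S'' < card S" unfolding S''_def using a(1) fin K_def
        by (intro psubset_card_mono) auto
      have finS'': "finite S''" using fin S''_def by auto
      have antisS'': "\<And>x y. x \<in> S'' \<Longrightarrow> y \<in> S'' \<Longrightarrow> le x y \<Longrightarrow> le y x \<Longrightarrow> x = y"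
        using antis S''_def by blast
      have widS'': "\<forall>Z\<subseteq>S''. antich le Z \<longrightarrow> card Z \<le> w - 1"
      proof (intro allI impI)
        fix Z assume Z: "Z \<subseteq> S''" "antich le Z"
        show "card Z \<le> w - 1"
        proof (rule ccontr)
          assume "\<not> card Z \<le> w - 1"
          moreover have "card Z \<le> w" using wid Z S''_def by blast
          ultimately have cZ: "card Z = w" by simp
          have ZS': "Z \<subseteq> S'" using Z(1) unfolding S''_def S'_def K_def by auto
          obtain z where z: "z \<in> Z" "col' z = c" using full[OF ZS' Z(2) cZ c(1)] by blast
          have "z \<in> X c" unfolding X_def good_def using z ZS' Z(2) cZ by blast
          hence "le z (xm c)" using xm(2)[OF c(1)] by blast
          hence "z \<in> K" unfolding K_def using z ZS' by auto
          thus False using z Z(1) S''_def by auto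
        qed
      qed
      from less.hyps[OF S''lt finS'' antisS'' widS''] obtain col'' where
        col'': "\<forall>x\<in>S''. col'' x < w - 1" "\<forall>x\<in>S''. \<forall>y\<in>S''. col'' x = col'' y \<longrightarrow> le x y \<or> le y x"
        by blast
      define col where "col x = (if x \<in> K then w - 1 else col'' x)" for x
      have Kch: "le x y \<or> le y x" if "x \<in> K" "y \<in> K" for x y
      proof -
        have ka: "le z a" if "z \<in> K" for z
          using that c(2) trans refl unfolding K_def by blast
        show ?thesis
        proof (cases "x = a \<or> y = a")
          case True thus ?thesis using ka that by blast
        next
          case False
          hence "x \<in> S'" "y \<in> S'" "col' x = c" "col' y = c" using that unfolding K_def by auto
          thus ?thesis using col'(2) by metis
        qed
      qed
      show ?thesis
      proof (intro exI[of _ col] conjI ballI impI)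
        fix x assume "x \<in> S" thus "col x < w" using col''(1) w1 unfolding col_def S''_def
          by (cases "x \<in> K") force+
      next
        fix x y assume xy: "x \<in> S" "y \<in> S" "col x = col y"
        show "le x y \<or> le y x"
        proof (cases "x \<in> K")
          case True
          show ?thesis
          proof (cases "y \<in> K")
            case True thus ?thesis using Kch \<open>x \<in> K\<close> by blast
          next
            case False
            hence "col'' y < w - 1" using col''(1) xy unfolding S''_def by auto
            thus ?thesis using xy \<open>x \<in> K\<close> False unfolding col_def by auto
          qed
        next
          case False
          show ?thesis
          proof (cases "y \<in> K")
            case True
            hence "col'' x < w - 1" using col''(1) xy False unfolding S''_def by auto
            thus ?thesis using xy \<open>y \<in> K\<close> False unfolding col_def by auto
          next
            case False
            thus ?thesis using xy \<open>x \<notin> K\<close> col''(2) unfolding col_def S''_def by auto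
          qed
        qed
      qed
    qed
  qed
qed



lemma rk_upd:
  assumes "i \<in> {1..n}"
  shows "rk n (p(i := v)) + p i = rk n p + v"
proof -
  have "rk n (p(i := v)) = v + (\<Sum>j\<in>{1..n} - {i}. p j)"
    unfolding rk_def using assms by (simp add: sum.remove)
  moreover have "rk n p = p i + (\<Sum>j\<in>{1..n} - {i}. p j)"
    unfolding rk_def using assms by (simp add: sum.remove)
  ultimately show ?thesis by simp
qed

lemma step_up:
  assumes "p \<in> hypergrid n t" "q \<in> hypergrid n t" "grid_le n p q" "p \<noteq> q"
  obtains i where "i \<in> {1..n}" "p i < q i" "p(i := Suc (p i)) \<in> hypergrid n t"
    "grid_le n p (p(i := Suc (p i)))" "grid_le n (p(i := Suc (p i))) q"
    "rk n (p(i := Suc (p i))) = Suc (rk n p)"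
proof -
  have "\<exists>i\<in>{1..n}. p i < q i"
  proof (rule ccontr)
    assume "\<not> ?thesis"
    hence "grid_le n q p" using assms(3) unfolding grid_le_def by force
    thus False using grid_le_antisym assms by blast
  qed
  then obtain i where i: "i \<in> {1..n}" "p i < q i" by blast
  show ?thesis
  proof (rule that[OF i])
    have "q i \<le> t" using assms(2) i(1) unfolding hypergrid_mem by auto
    thus "p(i := Suc (p i)) \<in> hypergrid n t"
      using assms(1) i unfolding hypergrid_mem by (auto simp: Suc_le_eq)
    show "grid_le n p (p(i := Suc (p i)))" unfolding grid_le_def by auto
    show "grid_le n (p(i := Suc (p i))) q" using assms(3) i unfolding grid_le_def by (auto simp: Suc_le_eq)
    show "rk n (p(i := Suc (p i))) = Suc (rk n p)" using rk_upd[OF i(1), of p "Suc (p i)"] by simp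
  qed
qed

lemma interp:
  assumes "c \<in> hypergrid n t" "c' \<in> hypergrid n t" "grid_le n c c'" "rk n c \<le> r" "r \<le> rk n c'"
  shows "\<exists>g\<in>hypergrid n t. grid_le n c g \<and> grid_le n g c' \<and> rk n g = r"
  using assms
proof (induction "r - rk n c" arbitrary: c)
  case 0
  hence "rk n c = r" by simp
  thus ?case using 0 by (intro bexI[of _ c]) auto
next
  case (Suc d)
  have "c \<noteq> c'" using Suc by auto
  then obtain i where i: "i \<in> {1..n}" "c i < c' i" "c(i := Suc (c i)) \<in> hypergrid n t" "grid_le n c (c(i := Suc (c i)))"
      "grid_le n (c(i := Suc (c i))) c'" "rk n (c(i := Suc (c i))) = Suc (rk n c)"
    by (rule step_up[OF Suc.prems(1,2,3)])
  have "\<exists>g\<in>hypergrid n t. grid_le n (c(i := Suc (c i))) g \<and> grid_le n g c' \<and> rk n g = r"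
    using Suc.hyps(1)[of "c(i := Suc (c i))"] Suc.hyps(2) Suc.prems i(3,5,6) by simp
  thus ?case using i(4) grid_le_trans by blast
qed

lemma box_chain:
  assumes "p \<in> hypergrid n t" "q \<in> hypergrid n t" "grid_le n p q"
  shows "\<exists>C. C \<subseteq> hypergrid n t \<and> (\<forall>x\<in>C. grid_le n p x \<and> grid_le n x q) \<and> finite C
     \<and> is_chain n C \<and> card C = rk n q - rk n p + 1"
  using assms
proof (induction "rk n q - rk n p" arbitrary: p)
  case 0
  have "p = q"
  proof (rule ccontr)
    assume "p \<noteq> q"
    hence "rk n p < rk n q" using rk_strict 0 by blast
    thus False using 0 by simp
  qed
  thus ?case using 0 by (intro exI[of _ "{p}"]) (auto simp: is_chain_def)
next
  case (Suc d)
  have "p \<noteq> q" using Suc by auto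
  then obtain i where i: "i \<in> {1..n}" "p i < q i" "p(i := Suc (p i)) \<in> hypergrid n t"
      "grid_le n p (p(i := Suc (p i)))" "grid_le n (p(i := Suc (p i))) q" "rk n (p(i := Suc (p i))) = Suc (rk n p)"
    by (rule step_up[OF Suc.prems])
  define p1 where "p1 = p(i := Suc (p i))"
  have "d = rk n q - rk n p1" using Suc.hyps(2) i(6) p1_def by simp
  from Suc.hyps(1)[OF this] i p1_def Suc.prems obtain C1 where
    C1: "C1 \<subseteq> hypergrid n t" "\<forall>x\<in>C1. grid_le n p1 x \<and> grid_le n x q" "finite C1" "is_chain n C1"
      "card C1 = rk n q - rk n p1 + 1" by blast
  have pn: "p \<notin> C1"
  proof
    assume "p \<in> C1"
    hence "grid_le n p1 p" using C1(2) by blast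
    hence "p1 i \<le> p i" using i(1) unfolding grid_le_def by blast
    thus False unfolding p1_def by simp
  qed
  have rq: "rk n p1 \<le> rk n q" using rk_mono i(5) p1_def by blast
  show ?case
  proof (intro exI[of _ "insert p C1"] conjI)
    show "insert p C1 \<subseteq> hypergrid n t" using C1(1) Suc.prems by auto
    have pp1: "grid_le n p p1" using i(4) p1_def by simp
    show "\<forall>x\<in>insert p C1. grid_le n p x \<and> grid_le n x q"
    proof
      fix x assume "x \<in> insert p C1"
      thus "grid_le n p x \<and> grid_le n x q"
      proof
        assume "x = p" thus ?thesis using Suc.prems(3) by simp
      next
        assume "x \<in> C1"
        hence "grid_le n p1 x" "grid_le n x q" using C1(2) by auto
        thus ?thesis using pp1 grid_le_trans by metis
      qed
    qed
    show "finite (insert p C1)" using C1 by simp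
    have px: "grid_le n p x" if "x \<in> C1" for x
      using C1(2) that pp1 grid_le_trans by metis
    show "is_chain n (insert p C1)"
      unfolding is_chain_def
    proof (intro ballI)
      fix x y assume "x \<in> insert p C1" "y \<in> insert p C1"
      thus "grid_le n x y \<or> grid_le n y x"
        using px C1(4) unfolding is_chain_def by auto
    qed
    show "card (insert p C1) = rk n q - rk n p + 1"
      using C1(3,5) pn i(6) rq p1_def by simp
  qed
qed

lemma is_anti_antich: "is_anti n Z = antich (grid_le n) Z"
  unfolding is_anti_def antich_def by simp

definition botg :: "nat \<Rightarrow> nat \<Rightarrow> nat" where "botg n = (\<lambda>i. if i \<in> {1..n} then 1 else undefined)"
definition topg :: "nat \<Rightarrow> nat \<Rightarrow> nat \<Rightarrow> nat" where "topg n t = (\<lambda>i. if i \<in> {1..n} then t else undefined)"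

lemma bot_grid: "1 \<le> t \<Longrightarrow> botg n \<in> hypergrid n t" unfolding botg_def hypergrid_mem by auto
lemma top_grid: "1 \<le> t \<Longrightarrow> topg n t \<in> hypergrid n t" unfolding topg_def hypergrid_mem by auto
lemma bot_le: "f \<in> hypergrid n t \<Longrightarrow> grid_le n (botg n) f" unfolding botg_def hypergrid_mem grid_le_def by auto
lemma top_ge: "f \<in> hypergrid n t \<Longrightarrow> grid_le n f (topg n t)" unfolding topg_def hypergrid_mem grid_le_def by auto
lemma rk_botg: "rk n (botg n) = n" unfolding rk_def botg_def by simp
lemma rk_top: "rk n (topg n t) = n * t" unfolding rk_def topg_def by simp

lemma anti_lower:
  assumes k2: "2 \<le> k" and t1: "1 \<le> t" and sat: "induced_saturated {1..k} antichain_le n t F"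
  shows "n * t + 1 \<le> card F + n"
proof -
  have FG: "F \<subseteq> hypergrid n t" using sat unfolding induced_saturated_def by blast
  have finF: "finite F" using FG finite_hypergrid by (rule finite_subset)
  have free: "\<not> (\<exists>Z\<subseteq>F. card Z = k \<and> is_anti n Z)"
    using sat anti_copy_iff[of k n F] k2 unfolding induced_saturated_def induced_free_def by auto
  have wid: "\<forall>Z\<subseteq>F. antich (grid_le n) Z \<longrightarrow> card Z \<le> k - 1"
  proof (intro allI impI)
    fix Z assume Z: "Z \<subseteq> F" "antich (grid_le n) Z"
    show "card Z \<le> k - 1"
    proof (rule ccontr)
      assume "\<not> card Z \<le> k - 1"
      hence "k \<le> card Z" by simp
      then obtain T where T: "T \<subseteq> Z" "card T = k" by (metis obtain_subset_with_card_n)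
      have "is_anti n T" using Z(2) T(1) unfolding is_anti_antich antich_def by blast
      thus False using free T Z(1) by blast
    qed
  qed
  have "\<exists>col. (\<forall>x\<in>F. col x < k - 1) \<and> (\<forall>x\<in>F. \<forall>y\<in>F. col x = col y \<longrightarrow> grid_le n x y \<or> grid_le n y x)"
  proof (rule dilworth[where le = "grid_le n"])
    show "\<And>x y z. grid_le n x y \<Longrightarrow> grid_le n y z \<Longrightarrow> grid_le n x z" by (rule grid_le_trans)
    show "\<And>x. grid_le n x x" by simp
    show "finite F" by (rule finF)
    show "\<And>x y. x \<in> F \<Longrightarrow> y \<in> F \<Longrightarrow> grid_le n x y \<Longrightarrow> grid_le n y x \<Longrightarrow> x = y"
      using FG grid_le_antisym by (meson subsetD)
    show "\<forall>Z\<subseteq>F. antich (grid_le n) Z \<longrightarrow> card Z \<le> k - 1" by (rule wid)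
  qed
  then obtain col where col: "\<And>x. x \<in> F \<Longrightarrow> col x < k - 1"
    "\<And>x y. x \<in> F \<Longrightarrow> y \<in> F \<Longrightarrow> col x = col y \<Longrightarrow> grid_le n x y \<or> grid_le n y x" by blast
  define C0 where "C0 = {x\<in>F. col x = 0}"
  have inF: "g \<in> F" if g: "g \<in> hypergrid n t" "\<forall>c\<in>C0. grid_le n g c \<or> grid_le n c g" for g
  proof (rule ccontr)
    assume gF: "g \<notin> F"
    hence "\<not> induced_free {1..k} antichain_le n (insert g F)" using sat g unfolding induced_saturated_def by blast
    then obtain Z where Z: "Z \<subseteq> insert g F" "card Z = k" "is_anti n Z"
      using anti_copy_iff[of k n "insert g F"] k2 unfolding induced_free_def by auto
    show False
    proof (cases "g \<in> Z")
      case False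
      thus False using free Z by blast
    next
      case True
      define Z' where "Z' = Z - {g}"
      have Z'F: "Z' \<subseteq> F" using Z Z'_def by auto
      have finZ: "finite Z" using Z k2 by (intro card_ge_0_finite) simp
      have cZ': "card Z' = k - 1" using Z(2) True Z'_def finZ by simp
      have injc: "inj_on col Z'"
      proof
        fix x y assume xy: "x \<in> Z'" "y \<in> Z'" "col x = col y"
        hence "grid_le n x y \<or> grid_le n y x" using col(2) Z'F by auto
        thus "x = y" using Z(3) xy Z'_def unfolding is_anti_def by auto
      qed
      have "col ` Z' \<subseteq> {1..<k-1}"
      proof
        fix c assume "c \<in> col ` Z'"
        then obtain z where z: "z \<in> Z'" "c = col z" by blast
        have "col z \<noteq> 0"
        proof
          assume "col z = 0"
          hence "z \<in> C0" using z Z'F C0_def by auto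
          hence cmp: "grid_le n g z \<or> grid_le n z g" using g by blast
          have "z \<noteq> g" using z Z'_def by auto
          moreover have "z \<in> Z" using z Z'_def by auto
          ultimately show False using cmp Z(3) True unfolding is_anti_def by metis
        qed
        thus "c \<in> {1..<k-1}" using z col(1) Z'F by auto
      qed
      hence "card (col ` Z') \<le> card {1..<k-1}" by (intro card_mono) auto
      hence "card Z' \<le> k - 2" using injc by (simp add: card_image)
      thus False using cZ' k2 by simp
    qed
  qed
  define C where "C = insert (botg n) (insert (topg n t) C0)"
  have CG: "C \<subseteq> hypergrid n t" using C_def C0_def FG bot_grid top_grid t1 by auto
  have Cch: "grid_le n x y \<or> grid_le n y x" if xy: "x \<in> C" "y \<in> C" for x y
  proof -
    consider "x = botg n" | "x = topg n t" | "y = botg n" | "y = topg n t" | "x \<in> C0" "y \<in> C0"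
      using xy unfolding C_def by blast
    thus ?thesis
    proof cases
      case 5 thus ?thesis using col(2) C0_def by auto
    qed (use xy CG bot_le top_ge in \<open>auto\<close>)
  qed
  have rF: "r \<in> rk n ` F" if r: "r \<in> {n..n*t}" for r
  proof -
    have "\<exists>x. (x \<in> C \<and> rk n x \<le> r) \<and> (\<forall>y. (y \<in> C \<and> rk n y \<le> r) \<longrightarrow> rk n y \<le> rk n x)"
      by (rule ex_has_greatest_nat[where k = "botg n" and b = "Suc r"]) (use C_def rk_botg r in auto)
    then obtain c where c: "c \<in> C" "rk n c \<le> r" "\<And>y. y \<in> C \<Longrightarrow> rk n y \<le> r \<Longrightarrow> rk n y \<le> rk n c" by blast
    have "\<exists>x. (x \<in> C \<and> r \<le> rk n x) \<and> (\<forall>y. (y \<in> C \<and> r \<le> rk n y) \<longrightarrow> rk n x \<le> rk n y)"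
      by (rule ex_has_least_nat[where k = "topg n t"]) (use C_def rk_top r in auto)
    then obtain c' where c': "c' \<in> C" "r \<le> rk n c'" "\<And>y. y \<in> C \<Longrightarrow> r \<le> rk n y \<Longrightarrow> rk n c' \<le> rk n y" by blast
    have cc': "grid_le n c c'"
    proof (rule ccontr)
      assume "\<not> grid_le n c c'"
      hence "grid_le n c' c" "c' \<noteq> c" using Cch[OF c(1) c'(1)] by auto
      hence "rk n c' < rk n c" using rk_strict CG c(1) c'(1) by blast
      thus False using c(2) c'(2) by simp
    qed
    obtain g where g: "g \<in> hypergrid n t" "grid_le n c g" "grid_le n g c'" "rk n g = r"
      using interp[OF _ _ cc' c(2) c'(2)] CG c(1) c'(1) by blast
    have "\<forall>x\<in>C0. grid_le n g x \<or> grid_le n x g"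
    proof
      fix x assume "x \<in> C0"
      hence x: "x \<in> C" using C_def by auto
      show "grid_le n g x \<or> grid_le n x g"
      proof (cases "rk n x \<le> r")
        case True
        have "grid_le n x c"
        proof (rule ccontr)
          assume "\<not> grid_le n x c"
          hence "grid_le n c x" "c \<noteq> x" using Cch[OF x c(1)] by auto
          hence "rk n c < rk n x" using rk_strict CG c(1) x by blast
          thus False using c(3)[OF x True] by simp
        qed
        thus ?thesis using g(2) grid_le_trans by blast
      next
        case False
        have "grid_le n c' x"
        proof (rule ccontr)
          assume "\<not> grid_le n c' x"
          hence "grid_le n x c'" "c' \<noteq> x" using Cch[OF x c'(1)] by auto
          hence "rk n x < rk n c'" using rk_strict CG c'(1) x by blast
          thus False using c'(3)[OF x] False by simp
        qed
        thus ?thesis using g(3) grid_le_trans by blast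
      qed
    qed
    hence "g \<in> F" using inF g(1) by blast
    thus ?thesis using g(4) by blast
  qed
  hence "{n..n*t} \<subseteq> rk n ` F" by blast
  hence "card {n..n*t} \<le> card (rk n ` F)" using finF by (intro card_mono) auto
  also have "\<dots> \<le> card F" using finF by (rule card_image_le)
  finally show ?thesis by simp
qed



lemma rk_split: "1 \<le> n \<Longrightarrow> rk n f = (\<Sum>i\<in>{1..<n}. f i) + f n"
proof -
  assume "1 \<le> n"
  hence "{1..n} = insert n {1..<n}" by auto
  thus ?thesis unfolding rk_def by simp
qed

lemma minmono: "(a::nat) \<le> b \<Longrightarrow> min (a - 1) c \<le> min (b - 1) c"
  by (simp add: min_def) linarith

lemma chain_constr:
  fixes k n t l :: nat and m :: "nat \<Rightarrow> nat"
  assumes n1: "1 \<le> n" and t2: "2 \<le> t" and l1: "1 \<le> l" and lt: "l < t"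
    and mt: "\<And>i. m i \<le> t - 1" and lfull: "2 \<le> l \<Longrightarrow> \<forall>i\<in>{1..<n}. m i = t - 1"
    and kdef: "k = (\<Sum>i\<in>{1..<n}. m i) + l + 2"
  shows "\<exists>F. induced_saturated {1..k} chain_le n t F \<and> card F \<le> 2 ^ (k - 2)"
proof -
  define Ls where "Ls = {x \<in> hypergrid n t. x n \<le> l \<and> (\<forall>i\<in>{1..<n}. x i \<le> m i + 1)}"
  define Hs where "Hs = {x \<in> hypergrid n t. x n = t \<and> (\<forall>i\<in>{1..<n}. x i \<le> m i \<or> x i = t)}"
  define F where "F = Ls \<union> Hs"
  define M where "M = (\<Sum>i\<in>{1..<n}. m i)"
  have FG: "F \<subseteq> hypergrid n t" unfolding F_def Ls_def Hs_def by blast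
  have nn: "n \<in> {1..n}" using n1 by simp
  have LH: "Ls \<inter> Hs = {}" unfolding Ls_def Hs_def using lt by auto
  define S where "S x = (\<Sum>i\<in>{1..<n}. min (x i - 1) (m i))" for x :: "nat \<Rightarrow> nat"
  define T where "T x = (if x n = t then l else x n - 1)" for x :: "nat \<Rightarrow> nat"
  have Smono: "S x \<le> S y" if "grid_le n x y" for x y
    unfolding S_def using that unfolding grid_le_def by (intro sum_mono minmono) auto
  have piB: "S x + T x \<le> M + l" if "x \<in> F" for x
  proof -
    have "S x \<le> M" unfolding S_def M_def by (intro sum_mono) auto
    moreover have "T x \<le> l"
    proof (cases "x n = t")
      case False
      hence "x \<in> Ls" using that unfolding F_def Hs_def by auto
      thus ?thesis unfolding T_def Ls_def by auto
    qed (simp add: T_def)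
    ultimately show ?thesis by simp
  qed
  have pistrict: "S x + T x < S y + T y" if xy: "x \<in> F" "y \<in> F" "grid_le n x y" "x \<noteq> y" for x y
  proof -
    have xg: "x \<in> hypergrid n t" and yg: "y \<in> hypergrid n t" using xy FG by auto
    have vx: "1 \<le> x i \<and> x i \<le> t" if "i \<in> {1..n}" for i using xg that unfolding hypergrid_mem by auto
    have vy: "1 \<le> y i \<and> y i \<le> t" if "i \<in> {1..n}" for i using yg that unfolding hypergrid_mem by auto
    have xny: "x n \<le> y n" using xy(3) nn unfolding grid_le_def by blast
    show ?thesis
    proof (cases "x n < y n")
      case True
      have "T x < T y"
      proof (cases "y n = t")
        case True
        hence "x n \<noteq> t" using \<open>x n < y n\<close> by simp
        hence "x \<in> Ls" using xy(1) unfolding F_def Hs_def by auto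
        hence "x n \<le> l" unfolding Ls_def by auto
        thus ?thesis unfolding T_def using True \<open>x n \<noteq> t\<close> vx[OF nn] by auto
      next
        case False
        hence "x n \<noteq> t" using \<open>x n < y n\<close> vy[OF nn] by auto
        thus ?thesis unfolding T_def using False \<open>x n < y n\<close> vx[OF nn] by auto
      qed
      thus ?thesis using Smono[OF xy(3)] by simp
    next
      case False
      hence eqn: "x n = y n" using xny by simp
      hence Teq: "T x = T y" unfolding T_def by simp
      obtain i where i: "i \<in> {1..n}" "x i < y i"
      proof -
        have "\<exists>i\<in>{1..n}. x i < y i"
        proof (rule ccontr)
          assume "\<not> ?thesis"
          hence "grid_le n y x" using xy(3) unfolding grid_le_def by force
          thus False using grid_le_antisym xg yg xy by blast
        qed
        thus ?thesis using that by blast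
      qed
      have i': "i \<in> {1..<n}" using i eqn by (auto simp: le_less)
      have xim: "x i \<le> m i"
      proof (cases "y n = t")
        case True
        hence "x \<in> Hs" using xy(1) eqn lt unfolding F_def Ls_def by auto
        hence "x i \<le> m i \<or> x i = t" using i' unfolding Hs_def by auto
        thus ?thesis using i vy[OF i(1)] by auto
      next
        case False
        hence "y \<in> Ls" using xy(2) unfolding F_def Hs_def by auto
        hence "y i \<le> m i + 1" using i' unfolding Ls_def by auto
        thus ?thesis using i by simp
      qed
      have "S x < S y" unfolding S_def
      proof (rule sum_strict_mono_ex1)
        show "finite {1..<n}" by simp
        show "\<forall>j\<in>{1..<n}. min (x j - 1) (m j) \<le> min (y j - 1) (m j)"
        proof
          fix j assume "j \<in> {1..<n}"
          hence "x j \<le> y j" using xy(3) unfolding grid_le_def by auto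
          thus "min (x j - 1) (m j) \<le> min (y j - 1) (m j)" by (rule minmono)
        qed
        show "\<exists>j\<in>{1..<n}. min (x j - 1) (m j) < min (y j - 1) (m j)"
          using i' xim i vx[OF i(1)] by (intro bexI[of _ i]) auto
      qed
      thus ?thesis using Teq by simp
    qed
  qed
  have free: "induced_free {1..k} chain_le n F"
    unfolding induced_free_def
  proof
    assume "\<exists>\<phi>. induced_copy {1..k} chain_le n F \<phi>"
    then obtain \<phi> where "induced_copy {1..k} chain_le n F \<phi>" by blast
    from no_long_chain[OF this, of "\<lambda>x. S x + T x" "M + l"] pistrict piB
    have "k \<le> M + l + 1" by blast
    thus False using kdef M_def by simp
  qed
  have satur: "\<not> induced_free {1..k} chain_le n (insert g F)" if g: "g \<in> hypergrid n t" "g \<notin> F" for g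
  proof -
    have vg: "1 \<le> g i \<and> g i \<le> t" if "i \<in> {1..n}" for i using g that unfolding hypergrid_mem by auto
    have gnl: "l \<le> g n"
    proof (rule ccontr)
      assume "\<not> l \<le> g n"
      hence "2 \<le> l" using vg[OF nn] by simp
      hence "\<forall>i\<in>{1..<n}. m i = t - 1" by (rule lfull)
      hence "g \<in> Ls" unfolding Ls_def using g(1) \<open>\<not> l \<le> g n\<close> vg t2 by fastforce
      thus False using g F_def by auto
    qed
    define lt' where "lt' = (\<lambda>i. if i \<in> {1..<n} then min (g i) (m i + 1) else if i = n then l else undefined)"
    define p where "p = (\<lambda>i. if i \<in> {1..<n} then min (g i) (m i + 1) else if i = n then t else undefined)"
    define q where "q = (\<lambda>i. if i \<in> {1..<n} then m i + 1 else if i = n then t else undefined)"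
    have mt': "m i + 1 \<le> t" for i using mt[of i] t2 by linarith
    have ltg: "lt' \<in> hypergrid n t" unfolding lt'_def hypergrid_mem using vg l1 lt mt' n1
      by (auto simp: min_def)
    have pg: "p \<in> hypergrid n t" unfolding p_def hypergrid_mem using vg mt' n1 t2
      by (auto simp: min_def)
    have qg: "q \<in> hypergrid n t" unfolding q_def hypergrid_mem using mt' n1 t2 by auto
    have bl: "grid_le n (botg n) lt'" using bot_le ltg by blast
    have pq: "grid_le n p q" unfolding grid_le_def p_def q_def by auto
    have ltle: "grid_le n lt' g" unfolding grid_le_def lt'_def using gnl by auto
    obtain C1 where C1: "C1 \<subseteq> hypergrid n t" "\<forall>x\<in>C1. grid_le n (botg n) x \<and> grid_le n x lt'" "finite C1"
      "is_chain n C1" "card C1 = rk n lt' - rk n (botg n) + 1"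
      using box_chain[OF bot_grid ltg bl] t2 by auto
    obtain C2 where C2: "C2 \<subseteq> hypergrid n t" "\<forall>x\<in>C2. grid_le n p x \<and> grid_le n x q" "finite C2"
      "is_chain n C2" "card C2 = rk n q - rk n p + 1"
      using box_chain[OF pg qg pq] by auto
    define e where "e x = (\<lambda>i. if i \<in> {1..<n} \<and> x i = m i + 1 then t else x i)" for x :: "nat \<Rightarrow> nat"
    have C2v: "x n = t" "\<And>i. i \<in> {1..<n} \<Longrightarrow> min (g i) (m i + 1) \<le> x i \<and> x i \<le> m i + 1" if "x \<in> C2" for x
    proof -
      have a: "grid_le n p x" "grid_le n x q" using C2(2) that by auto
      have "p n \<le> x n" "x n \<le> q n" using a nn unfolding grid_le_def by auto
      moreover have "p n = t" "q n = t" unfolding p_def q_def by auto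
      ultimately show "x n = t" by simp
      fix i assume i: "i \<in> {1..<n}"
      have "p i \<le> x i" "x i \<le> q i" using a i unfolding grid_le_def by auto
      thus "min (g i) (m i + 1) \<le> x i \<and> x i \<le> m i + 1" using i unfolding p_def q_def by auto
    qed
    have eequiv: "grid_le n (e x) (e y) \<longleftrightarrow> grid_le n x y" if xy: "x \<in> C2" "y \<in> C2" for x y
    proof -
      have c: "e x i \<le> e y i \<longleftrightarrow> x i \<le> y i" if i: "i \<in> {1..n}" for i
      proof (cases "i \<in> {1..<n}")
        case True
        have "x i \<le> m i + 1" "y i \<le> m i + 1" using C2v(2)[OF xy(1) True] C2v(2)[OF xy(2) True] by auto
        thus ?thesis unfolding e_def using True mt[of i] t2 by auto
      next
        case False thus ?thesis unfolding e_def by auto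
      qed
      show ?thesis unfolding grid_le_def using c by blast
    qed
    have eg: "e x \<in> Hs" if "x \<in> C2" for x
    proof -
      have xg: "x \<in> hypergrid n t" using that C2(1) by auto
      have "e x \<in> hypergrid n t"
        unfolding hypergrid_mem
      proof (intro conjI allI ballI impI)
        fix i assume "i \<in> {1..n}"
        thus "e x i \<in> {1..t}" using xg t2 unfolding e_def hypergrid_mem by auto
      next
        fix i assume "i \<notin> {1..n}"
        thus "e x i = undefined" using xg unfolding e_def hypergrid_mem by auto
      qed
      moreover have "e x n = t" unfolding e_def using C2v(1)[OF that] by simp
      moreover have "\<forall>i\<in>{1..<n}. e x i \<le> m i \<or> e x i = t"
      proof
        fix i assume i: "i \<in> {1..<n}"
        have "x i \<le> m i + 1" using C2v(2)[OF that i] by simp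
        thus "e x i \<le> m i \<or> e x i = t" using i unfolding e_def by auto
      qed
      ultimately show ?thesis unfolding Hs_def by blast
    qed
    have ege: "grid_le n g (e x)" if "x \<in> C2" for x
      unfolding grid_le_def
    proof
      fix i assume i: "i \<in> {1..n}"
      show "g i \<le> e x i"
      proof (cases "i \<in> {1..<n}")
        case True
        thus ?thesis using C2v(2)[OF that True] vg[OF i] unfolding e_def by (auto simp: min_def split: if_splits)
      next
        case False
        hence "i = n" using i by auto
        thus ?thesis using C2v(1)[OF that] vg[OF i] unfolding e_def by simp
      qed
    qed
    have einj: "inj_on e C2"
    proof
      fix x y assume xy: "x \<in> C2" "y \<in> C2" "e x = e y"
      hence "grid_le n x y" "grid_le n y x" using eequiv by (metis grid_le_refl)+
      thus "x = y" using grid_le_antisym C2(1) xy by blast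
    qed
    have C1L: "C1 \<subseteq> Ls"
    proof
      fix x assume x: "x \<in> C1"
      hence "grid_le n x lt'" using C1(2) by blast
      hence h: "\<forall>i\<in>{1..n}. x i \<le> lt' i" unfolding grid_le_def by blast
      have "x n \<le> lt' n" using h nn by blast
      hence "x n \<le> l" unfolding lt'_def by simp
      moreover have "\<forall>i\<in>{1..<n}. x i \<le> m i + 1"
      proof
        fix i assume i: "i \<in> {1..<n}"
        hence "x i \<le> lt' i" using h by auto
        thus "x i \<le> m i + 1" using i unfolding lt'_def by auto
      qed
      ultimately have "x n \<le> l" "\<forall>i\<in>{1..<n}. x i \<le> m i + 1" by blast+
      thus "x \<in> Ls" using x C1(1) unfolding Ls_def by auto
    qed
    have C1le: "grid_le n x g" if "x \<in> C1" for x using C1(2) that ltle grid_le_trans by metis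
    define Ch where "Ch = C1 \<union> insert g (e ` C2)"
    have ChG: "Ch \<subseteq> hypergrid n t" unfolding Ch_def using C1(1) g(1) eg Hs_def by auto
    have finCh: "finite Ch" unfolding Ch_def using C1(3) C2(3) by simp
    have chCh: "is_chain n Ch"
      unfolding is_chain_def
    proof (intro ballI)
      fix x y assume x: "x \<in> Ch" and y: "y \<in> Ch"
      have below: "grid_le n a b" if "a \<in> C1" "b \<in> insert g (e ` C2)" for a b
      proof -
        have "grid_le n g b" using that(2) ege by auto
        thus ?thesis using C1le[OF that(1)] grid_le_trans by metis
      qed
      have above: "grid_le n g b" if "b \<in> e ` C2" for b using that ege by auto
      show "grid_le n x y \<or> grid_le n y x"
      proof (cases "x \<in> C1")
        case True
        show ?thesis
        proof (cases "y \<in> C1")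
          case True thus ?thesis using C1(4) \<open>x \<in> C1\<close> unfolding is_chain_def by blast
        next
          case False
          hence "y \<in> insert g (e ` C2)" using y Ch_def by auto
          thus ?thesis using below \<open>x \<in> C1\<close> by blast
        qed
      next
        case False
        hence x2: "x \<in> insert g (e ` C2)" using x Ch_def by auto
        show ?thesis
        proof (cases "y \<in> C1")
          case True thus ?thesis using below x2 by blast
        next
          case False
          hence y2: "y \<in> insert g (e ` C2)" using y Ch_def by auto
          show ?thesis
          proof (cases "x = g \<or> y = g")
            case True thus ?thesis using x2 y2 above by auto
          next
            case False
            then obtain x' y' where "x' \<in> C2" "y' \<in> C2" "x = e x'" "y = e y'" using x2 y2 by auto
            thus ?thesis using eequiv C2(4) unfolding is_chain_def by metis
          qed
        qed
      qed
    qed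
    have cardCh: "card Ch = card C1 + 1 + card C2"
    proof -
      have d1: "C1 \<inter> insert g (e ` C2) = {}" using C1L eg LH g(2) F_def by blast
      have gn: "g \<notin> e ` C2" using eg g(2) F_def by blast
      have "card Ch = card C1 + card (insert g (e ` C2))"
        unfolding Ch_def using d1 C1(3) C2(3) by (intro card_Un_disjoint) auto
      also have "card (insert g (e ` C2)) = card C2 + 1"
        using gn C2(3) einj by (simp add: card_image)
      finally show ?thesis by simp
    qed
    have "rk n lt' = (\<Sum>i\<in>{1..<n}. min (g i) (m i + 1)) + l"
      using rk_split[OF n1, of lt'] unfolding lt'_def by simp
    moreover have "rk n p = (\<Sum>i\<in>{1..<n}. min (g i) (m i + 1)) + t"
      using rk_split[OF n1, of p] unfolding p_def by simp
    moreover have "rk n q = (\<Sum>i\<in>{1..<n}. m i + 1) + t"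
      using rk_split[OF n1, of q] unfolding q_def by simp
    moreover have "rk n (botg n) = n" by (rule rk_botg)
    moreover have "(\<Sum>i\<in>{1..<n}. min (g i) (m i + 1)) \<le> (\<Sum>i\<in>{1..<n}. m i + 1)" by (intro sum_mono) auto
    moreover have "(\<Sum>i\<in>{1..<n}. m i + 1) = M + (n - 1)"
    proof -
      have "(\<Sum>i\<in>{1..<n}. m i + 1) = (\<Sum>i\<in>{1..<n}. m i) + (\<Sum>i\<in>{1..<n}. (1::nat))"
        by (rule sum.distrib)
      thus ?thesis unfolding M_def by simp
    qed
    moreover have "n \<le> rk n lt'" using rk_bounds ltg by blast
    ultimately have "card C1 + 1 + card C2 = M + l + 2" using C1(5) C2(5) n1 by simp
    hence "k \<le> card Ch" using cardCh kdef M_def by simp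
    from chain_copy[OF ChG finCh chCh this] obtain \<phi> where "induced_copy {1..k} chain_le n Ch \<phi>" by blast
    moreover have "Ch \<subseteq> insert g F" unfolding Ch_def F_def using C1L eg by blast
    ultimately show ?thesis unfolding induced_free_def using copy_mono by blast
  qed
  have sat: "induced_saturated {1..k} chain_le n t F"
    unfolding induced_saturated_def using FG free satur by blast
  define Pm where "Pm = (\<Prod>i\<in>{1..<n}. m i + 1)"
  have cardL: "card Ls \<le> l * Pm"
  proof -
    have "Ls \<subseteq> PiE {1..n} (\<lambda>i. if i = n then {1..l} else {1..m i + 1})"
    proof
      fix x assume "x \<in> Ls"
      hence x: "x \<in> hypergrid n t" "x n \<le> l" "\<forall>i\<in>{1..<n}. x i \<le> m i + 1" unfolding Ls_def by auto
      show "x \<in> PiE {1..n} (\<lambda>i. if i = n then {1..l} else {1..m i + 1})"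
        using x unfolding hypergrid_mem PiE_def extensional_def by auto
    qed
    hence "card Ls \<le> card (PiE {1..n} (\<lambda>i. if i = n then {1..l} else {1..m i + 1}))"
      by (intro card_mono) (auto intro!: finite_PiE)
    also have "\<dots> = (\<Prod>i\<in>{1..n}. card (if i = n then {1..l} else {1..m i + 1}))" by (simp add: card_PiE)
    also have "\<dots> = l * Pm"
    proof -
      have "{1..n} = insert n {1..<n}" using n1 by auto
      hence "(\<Prod>i\<in>{1..n}. card (if i = n then {1..l} else {1..m i + 1}))
          = card {1..l} * (\<Prod>i\<in>{1..<n}. card (if i = n then {1..l} else {1..m i + 1}))" by simp
      also have "(\<Prod>i\<in>{1..<n}. card (if i = n then {1..l} else {1..m i + 1})) = Pm"
        unfolding Pm_def by (intro prod.cong) auto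
      finally show ?thesis by simp
    qed
    finally show ?thesis .
  qed
  have cardH: "card Hs \<le> Pm"
  proof -
    have "Hs \<subseteq> PiE {1..n} (\<lambda>i. if i = n then {t} else insert t {1..m i})"
    proof
      fix x assume "x \<in> Hs"
      hence x: "x \<in> hypergrid n t" "x n = t" "\<forall>i\<in>{1..<n}. x i \<le> m i \<or> x i = t" unfolding Hs_def by auto
      show "x \<in> PiE {1..n} (\<lambda>i. if i = n then {t} else insert t {1..m i})"
        using x unfolding hypergrid_mem PiE_def extensional_def by auto
    qed
    hence "card Hs \<le> card (PiE {1..n} (\<lambda>i. if i = n then {t} else insert t {1..m i}))"
      by (intro card_mono) (auto intro!: finite_PiE)
    also have "\<dots> = (\<Prod>i\<in>{1..n}. card (if i = n then {t} else insert t {1..m i}))" by (simp add: card_PiE)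
    also have "\<dots> = Pm"
    proof -
      have "{1..n} = insert n {1..<n}" using n1 by auto
      hence "(\<Prod>i\<in>{1..n}. card (if i = n then {t} else insert t {1..m i}))
          = (\<Prod>i\<in>{1..<n}. card (if i = n then {t} else insert t {1..m i}))" by simp
      also have "\<dots> = Pm"
        unfolding Pm_def
      proof (intro prod.cong refl)
        fix i assume "i \<in> {1..<n}"
        have "t \<notin> {1..m i}" using mt[of i] t2 by auto
        thus "card (if i = n then {t} else insert t {1..m i}) = m i + 1" using \<open>i \<in> {1..<n}\<close> by simp
      qed
      finally show ?thesis .
    qed
    finally show ?thesis .
  qed
  have "card F \<le> card Ls + card Hs" unfolding F_def by (rule card_Un_le)
  also have "\<dots> \<le> (l + 1) * Pm" using cardL cardH by (simp add: algebra_simps)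
  also have "\<dots> \<le> 2 ^ l * 2 ^ M"
  proof (rule mult_mono)
    show "l + 1 \<le> 2 ^ l" using less_exp[of l] by (simp add: Suc_le_eq)
    have "Pm \<le> (\<Prod>i\<in>{1..<n}. 2 ^ m i)" unfolding Pm_def
      by (intro prod_mono) (use less_exp in \<open>auto simp: Suc_le_eq\<close>)
    also have "\<dots> = 2 ^ M" unfolding M_def by (simp add: power_sum)
    finally show "Pm \<le> 2 ^ M" .
  qed auto
  also have "\<dots> = 2 ^ (k - 2)" using kdef M_def by (simp add: power_add[symmetric])
  finally show ?thesis using sat by blast
qed



definition labpat :: "nat \<Rightarrow> nat \<Rightarrow> nat" where "labpat j = (\<lambda>i. if i = j then 2 else 1)"

definition stairQ :: "nat \<Rightarrow> nat \<Rightarrow> nat \<Rightarrow> (nat \<Rightarrow> nat) \<Rightarrow> bool" where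
  "stairQ k n t x \<longleftrightarrow> (\<forall>i j. k \<le> i \<longrightarrow> i < j \<longrightarrow> j \<le> n \<longrightarrow> 1 < x j \<longrightarrow> x i = t)"

definition F0 :: "nat \<Rightarrow> nat \<Rightarrow> nat \<Rightarrow> (nat \<Rightarrow> nat) set" where
  "F0 k n t = {x \<in> hypergrid n t. (\<exists>j\<in>{1..<k}. \<forall>i\<in>{1..<k}. x i = labpat j i) \<and> stairQ k n t x}"

definition Fib :: "nat \<Rightarrow> nat \<Rightarrow> nat \<Rightarrow> (nat \<Rightarrow> nat) set" where
  "Fib k n t = {x \<in> hypergrid n t. (\<forall>i\<in>{k..n}. x i = 1) \<or> (\<forall>i\<in>{k..n}. x i = t)}"

lemma grid_val: "x \<in> hypergrid n t \<Longrightarrow> i \<in> {1..n} \<Longrightarrow> 1 \<le> x i \<and> x i \<le> t"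
  unfolding hypergrid_mem by auto

lemma stair_cmp:
  assumes k1: "1 \<le> k" and x: "x \<in> hypergrid n t" and y: "y \<in> hypergrid n t"
    and sx: "stairQ k n t x" and sy: "stairQ k n t y"
  shows "(\<forall>i\<in>{k..n}. x i \<le> y i) \<or> (\<forall>i\<in>{k..n}. y i \<le> x i)"
proof (rule ccontr)
  assume "\<not> ?thesis"
  then obtain i j where i: "i \<in> {k..n}" "y i < x i" and j: "j \<in> {k..n}" "x j < y j" by force
  have vi: "1 \<le> x i" "x i \<le> t" "1 \<le> y i" "y i \<le> t" using grid_val x y i k1 by (meson atLeastAtMost_iff le_trans)+
  have vj: "1 \<le> x j" "x j \<le> t" "1 \<le> y j" "y j \<le> t" using grid_val x y j k1 by (meson atLeastAtMost_iff le_trans)+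
  have "i \<noteq> j" using i j by auto
  hence "i < j \<or> j < i" by auto
  thus False
  proof
    assume "i < j"
    hence "y i = t" using sy i j vj unfolding stairQ_def by auto
    thus False using i vi by simp
  next
    assume "j < i"
    hence "x j = t" using sx i j vi unfolding stairQ_def by auto
    thus False using j vj by simp
  qed
qed

lemma le_split:
  assumes "k \<le> Suc n" "\<forall>i\<in>{1..<k}. x i \<le> y i" "\<forall>i\<in>{k..n}. x i \<le> y i"
  shows "grid_le n x y"
  unfolding grid_le_def
proof
  fix i assume "i \<in> {1..n}"
  thus "x i \<le> y i" using assms by (cases "i < k") auto
qed

lemma F0_cmp:
  assumes k: "1 \<le> k" "k \<le> Suc n" and x: "x \<in> F0 k n t" and y: "y \<in> F0 k n t"
    and eq: "\<forall>i\<in>{1..<k}. x i = y i"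
  shows "grid_le n x y \<or> grid_le n y x"
proof -
  have "(\<forall>i\<in>{k..n}. x i \<le> y i) \<or> (\<forall>i\<in>{k..n}. y i \<le> x i)"
    using stair_cmp[OF k(1)] x y unfolding F0_def by blast
  thus ?thesis using le_split[OF k(2)] eq by (metis order.refl)
qed

lemma F0_anti:
  assumes k: "1 \<le> k" "k \<le> Suc n" and Z: "Z \<subseteq> F0 k n t" "is_anti n Z"
  shows "card Z \<le> k - 1"
proof -
  define A where "A = (\<lambda>j. restrict (labpat j) {1..<k}) ` {1..<k}"
  have "inj_on (\<lambda>z. restrict z {1..<k}) Z"
  proof
    fix x y assume xy: "x \<in> Z" "y \<in> Z" "restrict x {1..<k} = restrict y {1..<k}"
    hence "\<forall>i\<in>{1..<k}. x i = y i" by (metis restrict_apply')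
    hence "grid_le n x y \<or> grid_le n y x" using F0_cmp[OF k] xy Z(1) by blast
    thus "x = y" using Z(2) xy unfolding is_anti_def by auto
  qed
  hence "card Z = card ((\<lambda>z. restrict z {1..<k}) ` Z)" by (simp add: card_image)
  also have "\<dots> \<le> card A"
  proof (rule card_mono)
    show "finite A" unfolding A_def by simp
    show "(\<lambda>z. restrict z {1..<k}) ` Z \<subseteq> A"
    proof
      fix w assume "w \<in> (\<lambda>z. restrict z {1..<k}) ` Z"
      then obtain z where z: "z \<in> Z" "w = restrict z {1..<k}" by blast
      then obtain j where j: "j \<in> {1..<k}" "\<forall>i\<in>{1..<k}. z i = labpat j i" using Z(1) unfolding F0_def by blast
      have "w = restrict (labpat j) {1..<k}" using z(2) j(2) by (auto simp: restrict_def)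
      thus "w \<in> A" using j(1) unfolding A_def by blast
    qed
  qed
  also have "\<dots> \<le> card {1..<k}" unfolding A_def by (rule card_image_le) simp
  finally show ?thesis by simp
qed

lemma F0_sub: "F0 k n t \<subseteq> hypergrid n t" unfolding F0_def by blast
lemma Fib_sub: "Fib k n t \<subseteq> hypergrid n t" unfolding Fib_def by blast

lemma card_F0:
  assumes k: "1 \<le> k" "k \<le> Suc n"
  shows "card (F0 k n t) \<le> (k - 1) * (n * t + 1)"
proof -
  define A where "A = (\<lambda>j. restrict (labpat j) {1..<k}) ` {1..<k}"
  define f where "f z = (restrict z {1..<k}, rk n z)" for z :: "nat \<Rightarrow> nat"
  have "inj_on f (F0 k n t)"
  proof
    fix x y assume xy: "x \<in> F0 k n t" "y \<in> F0 k n t" "f x = f y"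
    hence "\<forall>i\<in>{1..<k}. x i = y i" unfolding f_def by (metis prod.inject restrict_apply')
    hence c: "grid_le n x y \<or> grid_le n y x" using F0_cmp[OF k] xy by blast
    have r: "rk n x = rk n y" using xy(3) unfolding f_def by simp
    have g: "x \<in> hypergrid n t" "y \<in> hypergrid n t" using xy F0_sub by auto
    show "x = y"
    proof (rule ccontr)
      assume ne: "x \<noteq> y"
      from c show False
      proof
        assume l: "grid_le n x y" show False using rk_strict[OF g l ne] r by simp
      next
        assume l: "grid_le n y x" show False using rk_strict[OF g(2,1) l] ne r by simp
      qed
    qed
  qed
  hence "card (F0 k n t) = card (f ` F0 k n t)" by (simp add: card_image)
  also have "\<dots> \<le> card (A \<times> {0..n*t})"
  proof (rule card_mono)
    show "finite (A \<times> {0..n*t})" unfolding A_def by simp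
    show "f ` F0 k n t \<subseteq> A \<times> {0..n*t}"
    proof
      fix w assume "w \<in> f ` F0 k n t"
      then obtain z where z: "z \<in> F0 k n t" "w = f z" by blast
      then obtain j where j: "j \<in> {1..<k}" "\<forall>i\<in>{1..<k}. z i = labpat j i" unfolding F0_def by blast
      have "restrict z {1..<k} = restrict (labpat j) {1..<k}" using j(2) by (auto simp: restrict_def)
      hence "restrict z {1..<k} \<in> A" using j(1) unfolding A_def by blast
      moreover have "rk n z \<le> n * t" using rk_bounds z(1) F0_sub by blast
      ultimately show "w \<in> A \<times> {0..n*t}" using z(2) unfolding f_def by simp
    qed
  qed
  also have "\<dots> = card A * (n * t + 1)" by (simp add: card_cartesian_product)
  also have "\<dots> \<le> (k - 1) * (n * t + 1)"
  proof -
    have "card A \<le> card {1..<k}" unfolding A_def by (rule card_image_le) simp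
    hence "card A \<le> k - 1" by simp
    thus ?thesis by (rule mult_right_mono) simp
  qed
  finally show ?thesis .
qed

lemma card_Fib:
  assumes k: "1 \<le> k" and kn: "k \<le> Suc n"
  shows "card (Fib k n t) \<le> 2 * t ^ (k - 1)"
proof -
  define h where "h = (\<lambda>(b::nat\<Rightarrow>nat, c::nat). (\<lambda>i. if i \<in> {1..<k} then b i else if i \<in> {k..n} then c else undefined))"
  have "Fib k n t \<subseteq> h ` ((PiE {1..<k} (\<lambda>_. {1..t})) \<times> {1, t})"
  proof
    fix x assume x: "x \<in> Fib k n t"
    hence xg: "x \<in> hypergrid n t" unfolding Fib_def by blast
    have "\<forall>i\<in>{1..<k}. x i \<in> {1..t}" using xg kn unfolding hypergrid_mem by auto
    hence "restrict x {1..<k} \<in> PiE {1..<k} (\<lambda>_. {1..t})" by auto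
    moreover have "x = h (restrict x {1..<k}, 1) \<or> x = h (restrict x {1..<k}, t)"
    proof -
      have ext: "x i = undefined" if "i \<notin> {1..n}" for i using xg that unfolding hypergrid_mem by blast
      from x have "(\<forall>i\<in>{k..n}. x i = 1) \<or> (\<forall>i\<in>{k..n}. x i = t)" unfolding Fib_def by blast
      thus ?thesis
      proof
        assume a: "\<forall>i\<in>{k..n}. x i = 1"
        have "x = h (restrict x {1..<k}, 1)"
        proof
          fix i show "x i = h (restrict x {1..<k}, 1) i"
            unfolding h_def using a ext[of i] k by auto
        qed
        thus ?thesis by blast
      next
        assume a: "\<forall>i\<in>{k..n}. x i = t"
        have "x = h (restrict x {1..<k}, t)"
        proof
          fix i show "x i = h (restrict x {1..<k}, t) i"
            unfolding h_def using a ext[of i] k by auto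
        qed
        thus ?thesis by blast
      qed
    qed
    ultimately show "x \<in> h ` ((PiE {1..<k} (\<lambda>_. {1..t})) \<times> {1, t})" by blast
  qed
  hence "card (Fib k n t) \<le> card (h ` ((PiE {1..<k} (\<lambda>_. {1..t})) \<times> {1, t}))"
    by (intro card_mono finite_imageI) (auto intro!: finite_PiE)
  also have "\<dots> \<le> card ((PiE {1..<k} (\<lambda>_. {1..t})) \<times> {1::nat, t})" by (rule card_image_le) (auto intro!: finite_PiE)
  also have "\<dots> \<le> t ^ (k - 1) * 2"
    by (simp add: card_cartesian_product card_PiE card_insert_if)
  finally show ?thesis by simp
qed



lemma anti_upper:
  assumes k2: "2 \<le> k" and t2: "2 \<le> t" and kn: "k \<le> n"
  shows "\<exists>G. induced_saturated {1..k} antichain_le n t G \<and> card G \<le> (k - 1) * (n * t + 1) + 2 * t ^ (k - 1)"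
proof -
  have k1: "1 \<le> k" "k \<le> Suc n" using k2 kn by auto
  define Pr where "Pr G \<longleftrightarrow> F0 k n t \<subseteq> G \<and> G \<subseteq> F0 k n t \<union> Fib k n t \<and> \<not> (\<exists>Z\<subseteq>G. card Z = k \<and> is_anti n Z)" for G
  have P0: "Pr (F0 k n t)"
    unfolding Pr_def
  proof (intro conjI)
    show "F0 k n t \<subseteq> F0 k n t" by (rule subset_refl)
    show "F0 k n t \<subseteq> F0 k n t \<union> Fib k n t" by (rule Un_upper1)
    show "\<not> (\<exists>Z\<subseteq>F0 k n t. card Z = k \<and> is_anti n Z)"
    proof
      assume "\<exists>Z\<subseteq>F0 k n t. card Z = k \<and> is_anti n Z"
      then obtain Z where "Z \<subseteq> F0 k n t" "card Z = k" "is_anti n Z" by blast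
      thus False using F0_anti[OF k1, of Z t] k2 by simp
    qed
  qed
  have bound: "\<forall>y. Pr y \<longrightarrow> card y < Suc (card (hypergrid n t))"
  proof (intro allI impI)
    fix y assume "Pr y"
    hence "y \<subseteq> F0 k n t \<union> Fib k n t" unfolding Pr_def by simp
    hence "y \<subseteq> hypergrid n t" using F0_sub[of k n t] Fib_sub[of k n t] by (meson Un_least subset_trans)
    hence "card y \<le> card (hypergrid n t)" by (intro card_mono) auto
    thus "card y < Suc (card (hypergrid n t))" by simp
  qed
  have "\<exists>G. Pr G \<and> (\<forall>H. Pr H \<longrightarrow> card H \<le> card G)"
    using ex_has_greatest_nat[of Pr "F0 k n t" card, OF P0 bound] .
  then obtain G where G: "Pr G" and Gmax: "\<And>H. Pr H \<Longrightarrow> card H \<le> card G" by blast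
  have "G \<subseteq> F0 k n t \<union> Fib k n t" using G unfolding Pr_def by simp
  hence GG: "G \<subseteq> hypergrid n t" using F0_sub[of k n t] Fib_sub[of k n t] by (meson Un_least subset_trans)
  have finG: "finite G" using GG finite_hypergrid by (rule finite_subset)
  have F0G: "F0 k n t \<subseteq> G" using G unfolding Pr_def by simp
  have key: "\<exists>Z\<subseteq>insert g G. card Z = k \<and> is_anti n Z" if g: "g \<in> hypergrid n t" "g \<notin> G" for g
  proof (cases "g \<in> Fib k n t")
    case True
    show ?thesis
    proof (rule ccontr)
      assume "\<not> ?thesis"
      hence "Pr (insert g G)" using G True unfolding Pr_def by blast
      hence "card (insert g G) \<le> card G" by (rule Gmax)
      thus False using g(2) finG by simp
    qed
  next
    case False
    have gv: "1 \<le> g i \<and> g i \<le> t" if "i \<in> {1..n}" for i using grid_val[OF g(1) that] .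
    have nf1: "\<exists>i\<in>{k..n}. g i \<noteq> 1" and nf2: "\<exists>i\<in>{k..n}. g i \<noteq> t"
      using False g(1) unfolding Fib_def by auto
    have ex: "\<exists>s. s \<in> F0 k n t \<and> (\<forall>i\<in>{1..<k}. s i = labpat j i) \<and> \<not> grid_le n s g \<and> \<not> grid_le n g s"
      if j: "j \<in> {1..<k}" for j
    proof -
      define mk where "mk m = (\<lambda>i. if i \<in> {1..<k} then labpat j i else if i \<in> {k..n} then m i else undefined)"
        for m :: "nat \<Rightarrow> nat"
      have mkF0: "mk m \<in> F0 k n t" if m1: "\<forall>i\<in>{k..n}. 1 \<le> m i \<and> m i \<le> t"
        and m2: "\<forall>i i'. k \<le> i \<longrightarrow> i < i' \<longrightarrow> i' \<le> n \<longrightarrow> 1 < m i' \<longrightarrow> m i = t" for m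
      proof -
        have "mk m \<in> hypergrid n t"
          unfolding hypergrid_mem mk_def labpat_def using m1 t2 kn k2 by auto
        moreover have "stairQ k n t (mk m)" unfolding stairQ_def mk_def using m2 by auto
        moreover have "\<forall>i\<in>{1..<k}. mk m i = labpat j i" unfolding mk_def by auto
        ultimately show ?thesis unfolding F0_def using j by blast
      qed
      have mkP: "\<forall>i\<in>{1..<k}. mk m i = labpat j i" for m unfolding mk_def by auto
      have le1: "grid_le n (mk m) g \<longleftrightarrow> (\<forall>i\<in>{1..<k}. labpat j i \<le> g i) \<and> (\<forall>i\<in>{k..n}. m i \<le> g i)" for m
      proof
        assume h: "grid_le n (mk m) g"
        show "(\<forall>i\<in>{1..<k}. labpat j i \<le> g i) \<and> (\<forall>i\<in>{k..n}. m i \<le> g i)"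
        proof (intro conjI ballI)
          fix i assume i: "i \<in> {1..<k}"
          hence "mk m i \<le> g i" using h kn unfolding grid_le_def by auto
          thus "labpat j i \<le> g i" using i unfolding mk_def by simp
        next
          fix i assume i: "i \<in> {k..n}"
          hence "mk m i \<le> g i" using h k2 unfolding grid_le_def by auto
          thus "m i \<le> g i" using i unfolding mk_def by simp
        qed
      next
        assume h: "(\<forall>i\<in>{1..<k}. labpat j i \<le> g i) \<and> (\<forall>i\<in>{k..n}. m i \<le> g i)"
        show "grid_le n (mk m) g" unfolding grid_le_def
        proof
          fix i assume "i \<in> {1..n}"
          thus "mk m i \<le> g i" using h unfolding mk_def by (cases "i < k") auto
        qed
      qed
      have le2: "grid_le n g (mk m) \<longleftrightarrow> (\<forall>i\<in>{1..<k}. g i \<le> labpat j i) \<and> (\<forall>i\<in>{k..n}. g i \<le> m i)" for m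
      proof
        assume h: "grid_le n g (mk m)"
        show "(\<forall>i\<in>{1..<k}. g i \<le> labpat j i) \<and> (\<forall>i\<in>{k..n}. g i \<le> m i)"
        proof (intro conjI ballI)
          fix i assume i: "i \<in> {1..<k}"
          hence "g i \<le> mk m i" using h kn unfolding grid_le_def by auto
          thus "g i \<le> labpat j i" using i unfolding mk_def by simp
        next
          fix i assume i: "i \<in> {k..n}"
          hence "g i \<le> mk m i" using h k2 unfolding grid_le_def by auto
          thus "g i \<le> m i" using i unfolding mk_def by simp
        qed
      next
        assume h: "(\<forall>i\<in>{1..<k}. g i \<le> labpat j i) \<and> (\<forall>i\<in>{k..n}. g i \<le> m i)"
        show "grid_le n g (mk m)" unfolding grid_le_def
        proof
          fix i assume "i \<in> {1..n}"
          thus "g i \<le> mk m i" using h unfolding mk_def by (cases "i < k") auto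
        qed
      qed
      show ?thesis
      proof (cases "\<forall>i\<in>{1..<k}. labpat j i \<le> g i")
        case A1: False
        have "mk (\<lambda>_. 1) \<in> F0 k n t" by (rule mkF0) (use t2 in auto)
        moreover have "\<not> grid_le n (mk (\<lambda>_. 1)) g" using le1 A1 by blast
        moreover have "\<not> grid_le n g (mk (\<lambda>_. 1))"
        proof
          assume "grid_le n g (mk (\<lambda>_. 1))"
          hence "\<forall>i\<in>{k..n}. g i = 1" using le2 gv k1 by (meson atLeastAtMost_iff le_antisym le_trans)
          thus False using nf1 by blast
        qed
        ultimately show ?thesis using mkP by blast
      next
        case A1: True
        show ?thesis
        proof (cases "\<forall>i\<in>{1..<k}. g i \<le> labpat j i")
          case A2: False
          have "mk (\<lambda>_. t) \<in> F0 k n t" by (rule mkF0) (use t2 in auto)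
          moreover have "\<not> grid_le n g (mk (\<lambda>_. t))" using le2 A2 by blast
          moreover have "\<not> grid_le n (mk (\<lambda>_. t)) g"
          proof
            assume "grid_le n (mk (\<lambda>_. t)) g"
            hence "\<forall>i\<in>{k..n}. g i = t" using le1 gv k1 by (meson atLeastAtMost_iff le_antisym le_trans)
            thus False using nf2 by blast
          qed
          ultimately show ?thesis using mkP by blast
        next
          case A2: True
          have gP: "\<forall>i\<in>{1..<k}. g i = labpat j i" using A1 A2 by (meson le_antisym)
          have "\<not> stairQ k n t g"
          proof
            assume "stairQ k n t g"
            hence "g \<in> F0 k n t" unfolding F0_def using g(1) gP j by blast
            thus False using F0G g(2) by blast
          qed
          then obtain i i' where ii: "k \<le> i" "i < i'" "i' \<le> n" "1 < g i'" "g i \<noteq> t"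
            unfolding stairQ_def by blast
          define m where "m = (\<lambda>x::nat. if x \<le> i then t else 1)"
          have "mk m \<in> F0 k n t" by (rule mkF0) (use t2 in \<open>auto simp: m_def\<close>)
          moreover have "\<not> grid_le n (mk m) g"
          proof
            assume "grid_le n (mk m) g"
            hence "m i \<le> g i" using le1 ii by auto
            hence "t \<le> g i" unfolding m_def by simp
            thus False using gv[of i] ii k1 by auto
          qed
          moreover have "\<not> grid_le n g (mk m)"
          proof
            assume "grid_le n g (mk m)"
            hence "g i' \<le> m i'" using le2 ii by auto
            thus False using ii unfolding m_def by auto
          qed
          ultimately show ?thesis using mkP by blast
        qed
      qed
    qed
    then obtain sf where sf: "\<And>j. j \<in> {1..<k} \<Longrightarrow> sf j \<in> F0 k n t \<and> (\<forall>i\<in>{1..<k}. sf j i = labpat j i) \<and> \<not> grid_le n (sf j) g \<and> \<not> grid_le n g (sf j)"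
      by metis
    have sfj: "sf j j = 2" if "j \<in> {1..<k}" for j using sf[OF that] that unfolding labpat_def by auto
    have sfj': "sf j i = 1" if "j \<in> {1..<k}" "i \<in> {1..<k}" "i \<noteq> j" for i j using sf[OF that(1)] that unfolding labpat_def by auto
    have notle: "\<not> grid_le n (sf j) (sf j')" if "j \<in> {1..<k}" "j' \<in> {1..<k}" "j \<noteq> j'" for j j'
    proof
      assume "grid_le n (sf j) (sf j')"
      hence "sf j j \<le> sf j' j" using that kn unfolding grid_le_def by auto
      thus False using sfj[OF that(1)] sfj'[OF that(2) that(1)] that(3) by simp
    qed
    have injsf: "inj_on sf {1..<k}"
    proof
      fix j j' assume "j \<in> {1..<k}" "j' \<in> {1..<k}" "sf j = sf j'"
      thus "j = j'" using notle by fastforce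
    qed
    have gnot: "g \<notin> sf ` {1..<k}" using sf F0G g(2) by blast
    define Z where "Z = insert g (sf ` {1..<k})"
    show ?thesis
    proof (intro exI[of _ Z] conjI)
      show "Z \<subseteq> insert g G" unfolding Z_def using sf F0G by blast
      show "card Z = k" unfolding Z_def using gnot injsf k2 by (simp add: card_image)
      show "is_anti n Z" unfolding is_anti_def Z_def
      proof (intro ballI impI)
        fix x y assume x: "x \<in> insert g (sf ` {1..<k})" and y: "y \<in> insert g (sf ` {1..<k})" and ne: "x \<noteq> y"
        show "\<not> grid_le n x y"
        proof (cases "x = g")
          case True
          then obtain j where "j \<in> {1..<k}" "y = sf j" using y ne by auto
          thus ?thesis using sf True by blast
        next
          case False
          then obtain j where j: "j \<in> {1..<k}" "x = sf j" using x by auto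
          show ?thesis
          proof (cases "y = g")
            case True thus ?thesis using sf j by blast
          next
            case False
            then obtain j' where "j' \<in> {1..<k}" "y = sf j'" using y by auto
            thus ?thesis using notle j ne by blast
          qed
        qed
      qed
    qed
  qed
  have sat: "induced_saturated {1..k} antichain_le n t G"
    unfolding induced_saturated_def induced_free_def
  proof (intro conjI ballI)
    show "G \<subseteq> hypergrid n t" by (rule GG)
    show "\<not> (\<exists>\<phi>. induced_copy {1..k} antichain_le n G \<phi>)"
      using anti_copy_iff[of k n G] k2 G unfolding Pr_def by auto
    fix g assume "g \<in> hypergrid n t - G"
    thus "\<not> \<not> (\<exists>\<phi>. induced_copy {1..k} antichain_le n (insert g G) \<phi>)"
      using key anti_copy_iff[of k n "insert g G"] k2 by auto
  qed
  have "card G \<le> card (F0 k n t \<union> Fib k n t)"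
    using G unfolding Pr_def by (intro card_mono) (auto intro: finite_subset[OF _ finite_hypergrid] simp: F0_def Fib_def)
  also have "\<dots> \<le> card (F0 k n t) + card (Fib k n t)" by (rule card_Un_le)
  also have "\<dots> \<le> (k - 1) * (n * t + 1) + 2 * t ^ (k - 1)"
    using card_F0[OF k1, of t] card_Fib[OF k1(1) k1(2), of t] by linarith
  finally show ?thesis using sat by blast
qed



lemma sum_min_lem: "(\<Sum>i\<in>{1..<Suc N}. min c (s - (i - 1) * c)) = min s (N * (c::nat))"
proof (induction N)
  case 0 thus ?case by simp
next
  case (Suc N)
  have "{1..<Suc (Suc N)} = insert (Suc N) {1..<Suc N}" by auto
  hence "(\<Sum>i\<in>{1..<Suc (Suc N)}. min c (s - (i - 1) * c)) = min c (s - N * c) + min s (N * c)"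
    using Suc.IH by simp
  also have "\<dots> = min s (Suc N * c)"
    by (cases "s \<le> N * c") (auto simp: min_def)
  finally show ?case .
qed

lemma params:
  fixes n t k :: nat
  assumes n1: "1 \<le> n" and t2: "2 \<le> t" and k3: "3 \<le> k" and kb: "k \<le> n * (t - 1) + 1"
  shows "\<exists>l m. 1 \<le> l \<and> l < t \<and> (\<forall>i. m i \<le> t - 1) \<and> (2 \<le> l \<longrightarrow> (\<forall>i\<in>{1..<n}. m i = t - 1))
      \<and> k = (\<Sum>i\<in>{1..<n}. m i) + l + 2"
proof (cases "k - 3 \<le> (n - 1) * (t - 1)")
  case True
  define m where "m i = min (t - 1) ((k - 3) - (i - 1) * (t - 1))" for i
  have "{1..<n} = {1..<Suc (n - 1)}" using n1 by auto
  hence "(\<Sum>i\<in>{1..<n}. m i) = min (k - 3) ((n - 1) * (t - 1))"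
    unfolding m_def using sum_min_lem by presburger
  hence "(\<Sum>i\<in>{1..<n}. m i) = k - 3" using True by simp
  thus ?thesis using k3 t2 by (intro exI[of _ 1] exI[of _ m]) (auto simp: m_def)
next
  case False
  define l where "l = k - 2 - (n - 1) * (t - 1)"
  have "(\<Sum>i\<in>{1..<n}. (t - 1)) = (n - 1) * (t - 1)" by simp
  moreover have "2 \<le> l" using False unfolding l_def by linarith
  moreover have "l < t"
  proof -
    have "n * (t - 1) = (n - 1) * (t - 1) + (t - 1)" using n1
      by (cases n) auto
    thus ?thesis using kb t2 unfolding l_def by linarith
  qed
  moreover have "k = (n - 1) * (t - 1) + l + 2" using False unfolding l_def by linarith
  ultimately show ?thesis by (intro exI[of _ l] exI[of _ "\<lambda>_. t - 1"]) auto
qed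

lemma sat_star_le: "induced_saturated X R n t F \<Longrightarrow> sat_star X R n t \<le> card F"
  unfolding sat_star_def by (rule Least_le) blast

lemma sat_star_ex: "induced_saturated X R n t F \<Longrightarrow> \<exists>G. induced_saturated X R n t G \<and> card G = sat_star X R n t"
  unfolding sat_star_def by (rule LeastI_ex) blast

lemma chain_part:
  assumes k2: "2 \<le> k" and t2: "2 \<le> t" and n1: "1 \<le> n" and emb: "embeds_in_grid {1..k} chain_le n t"
  shows "sat_star {1..k} chain_le n t \<le> 2 ^ (k - 2)"
proof -
  obtain \<phi> where \<phi>: "induced_copy {1..k} chain_le n (hypergrid n t) \<phi>" using emb unfolding embeds_in_grid_def by blast
  have "k \<le> (n * t - n) + 1"
  proof (rule no_long_chain[OF \<phi>, of "\<lambda>x. rk n x - n"])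
    fix x y assume "x \<in> hypergrid n t" "y \<in> hypergrid n t" "grid_le n x y" "x \<noteq> y"
    moreover from this have "rk n x < rk n y" by (intro rk_strict) auto
    ultimately show "rk n x - n < rk n y - n" using rk_bounds by (meson diff_less_mono)
  next
    fix x assume "x \<in> hypergrid n t"
    thus "rk n x - n \<le> n * t - n" using rk_bounds by (meson diff_le_mono)
  qed
  hence kb: "k \<le> n * (t - 1) + 1" by (simp add: diff_mult_distrib2)
  have "\<exists>F. induced_saturated {1..k} chain_le n t F \<and> card F \<le> 2 ^ (k - 2)"
  proof (cases "k = 2")
    case True
    define F where "F = {botg n}"
    have bg: "botg n \<in> hypergrid n t" using bot_grid t2 by simp
    have free: "induced_free {1..k} chain_le n F"
      unfolding induced_free_def
    proof
      assume "\<exists>\<psi>. induced_copy {1..k} chain_le n F \<psi>"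
      then obtain \<psi> where \<psi>: "induced_copy {1..k} chain_le n F \<psi>" by blast
      hence "card {1..k} \<le> card F" unfolding induced_copy_def F_def by (intro card_inj_on_le) auto
      thus False using True F_def by simp
    qed
    have sat: "\<not> induced_free {1..k} chain_le n (insert g F)" if g: "g \<in> hypergrid n t" "g \<notin> F" for g
    proof -
      have "{botg n, g} \<subseteq> hypergrid n t" using g bg by simp
      moreover have "is_chain n {botg n, g}" unfolding is_chain_def using bot_le g by auto
      moreover have "k \<le> card {botg n, g}" using True g F_def by simp
      ultimately obtain \<psi> where "induced_copy {1..k} chain_le n {botg n, g} \<psi>" using chain_copy by blast
      hence "induced_copy {1..k} chain_le n (insert g F) \<psi>" by (rule copy_mono) (auto simp: F_def)
      thus ?thesis unfolding induced_free_def by blast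
    qed
    have "induced_saturated {1..k} chain_le n t F"
      unfolding induced_saturated_def using free sat bg F_def by blast
    moreover have "card F \<le> 2 ^ (k - 2)" using F_def True by simp
    ultimately show ?thesis by blast
  next
    case False
    hence k3: "3 \<le> k" using k2 by simp
    obtain l m where lm: "1 \<le> l" "l < t" "\<forall>i. m i \<le> t - 1" "2 \<le> l \<longrightarrow> (\<forall>i\<in>{1..<n}. m i = t - 1)"
      "k = (\<Sum>i\<in>{1..<n}. m i) + l + 2" using params[OF n1 t2 k3 kb] by blast
    show ?thesis by (rule chain_constr[OF n1 t2 lm(1,2)]) (use lm in auto)
  qed
  then obtain F where "induced_saturated {1..k} chain_le n t F" "card F \<le> 2 ^ (k - 2)" by blast
  thus ?thesis using sat_star_le by (meson le_trans)
qed

lemma anti_bounds: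
  assumes k2: "2 \<le> k" and t2: "2 \<le> t" and kn: "k \<le> n"
  shows "n \<le> sat_star {1..k} antichain_le n t"
    "sat_star {1..k} antichain_le n t \<le> ((k - 1) * (t + 1) + 2 * t ^ (k - 1)) * n"
proof -
  obtain G where G: "induced_saturated {1..k} antichain_le n t G"
    "card G \<le> (k - 1) * (n * t + 1) + 2 * t ^ (k - 1)" using anti_upper[OF k2 t2 kn] by blast
  obtain H where H: "induced_saturated {1..k} antichain_le n t H" "card H = sat_star {1..k} antichain_le n t"
    using sat_star_ex[OF G(1)] by blast
  have "n * t + 1 \<le> card H + n" using anti_lower[OF k2 _ H(1)] t2 by simp
  moreover have "n * 2 \<le> n * t" using t2 by simp
  ultimately show "n \<le> sat_star {1..k} antichain_le n t" using H(2) by linarith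
  have n1: "1 \<le> n" using k2 kn by simp
  have "sat_star {1..k} antichain_le n t \<le> (k - 1) * (n * t + 1) + 2 * t ^ (k - 1)"
    using sat_star_le[OF G(1)] G(2) by linarith
  also have "\<dots> \<le> (k - 1) * (n * t + n) + 2 * t ^ (k - 1) * n"
  proof (rule add_mono)
    show "(k - 1) * (n * t + 1) \<le> (k - 1) * (n * t + n)" using n1 by (intro mult_le_mono2) simp
    show "2 * t ^ (k - 1) \<le> 2 * t ^ (k - 1) * n" using n1 by simp
  qed
  also have "\<dots> = ((k - 1) * (t + 1) + 2 * t ^ (k - 1)) * n"
  proof -
    have "a * (n * t + n) + b * n = (a * (t + 1) + b) * n" for a b :: nat by (simp add: algebra_simps)
    from this[of "k - 1" "2 * t ^ (k - 1)"] show ?thesis .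
  qed
  finally show "sat_star {1..k} antichain_le n t \<le> ((k - 1) * (t + 1) + 2 * t ^ (k - 1)) * n" .
qed

theorem mainTheorem4:
  fixes k t :: nat
  assumes "k \<ge> 2" and "t \<ge> 2"
  shows "(\<forall>n\<ge>1. embeds_in_grid {1..k} chain_le n t \<longrightarrow>
            sat_star {1..k} chain_le n t \<le> 2 ^ (k - 2))
       \<and> (\<lambda>n. real (sat_star {1..k} antichain_le n t)) \<in> \<Theta>(\<lambda>n. real n)"
proof (intro conjI allI impI)
  fix n :: nat assume "1 \<le> n" "embeds_in_grid {1..k} chain_le n t"
  thus "sat_star {1..k} chain_le n t \<le> 2 ^ (k - 2)" using chain_part assms by blast
next
  define C where "C = (k - 1) * (t + 1) + 2 * t ^ (k - 1)"
  show "(\<lambda>n. real (sat_star {1..k} antichain_le n t)) \<in> \<Theta>(\<lambda>n. real n)"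
  proof (rule bigthetaI)
    show "(\<lambda>n. real (sat_star {1..k} antichain_le n t)) \<in> O(\<lambda>n. real n)"
    proof (rule bigoI[where c = "real C"])
      show "\<forall>\<^sub>F n in at_top. norm (real (sat_star {1..k} antichain_le n t)) \<le> real C * norm (real n)"
        unfolding eventually_at_top_linorder
      proof (intro exI[of _ k] allI impI)
        fix n assume "k \<le> n"
        hence "sat_star {1..k} antichain_le n t \<le> C * n" using anti_bounds(2) assms C_def by blast
        hence "real (sat_star {1..k} antichain_le n t) \<le> real (C * n)" by (rule of_nat_mono)
        thus "norm (real (sat_star {1..k} antichain_le n t)) \<le> real C * norm (real n)" by simp
      qed
    qed
    show "(\<lambda>n. real (sat_star {1..k} antichain_le n t)) \<in> \<Omega>(\<lambda>n. real n)"
    proof (rule landau_omega.big_mono)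
      show "\<forall>\<^sub>F n in at_top. norm (real n) \<le> norm (real (sat_star {1..k} antichain_le n t))"
        unfolding eventually_at_top_linorder
      proof (intro exI[of _ k] allI impI)
        fix n assume "k \<le> n"
        hence "n \<le> sat_star {1..k} antichain_le n t" using anti_bounds(1) assms by blast
        thus "norm (real n) \<le> norm (real (sat_star {1..k} antichain_le n t))" by simp
      qed
    qed
  qed
qed


end
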